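(* Fix constants $\lambda>0$ and $\epsilon\in(0,1)$. Suppose that for each $n$ each of $n$ items is defective independently with probability $p=\frac{\lambda}{\log n}$ (i.i.d. prior). Then there exists $n_0$ such that for all $n>n_0$, any nonadaptive test scheme (test design together with any decoding method) that uses $T$ tests with $$T\le (1-\epsilon)\frac{\lambda}{\lambda+\log^2 2}\,n$$ to identify the set of defective items has error probability $1-o(1)$ as $n\to\infty$.
   Context: $\log$ denotes the natural logarithm. Nonadaptive group testing: a test is a subset of items, and its outcome is positive iff it contains at least one defective item (the logical OR of the defectivity indicators of its items). All tests are fixed before any outcomes are seen; a decoding method maps the vector of outcomes to an estimate of the defective set, and an error occurs when this estimate differs from the true defective set. *)

theory Defs
  imports Complex_Main
begin

definition iid_prior :: "real \<Rightarrow> nat \<Rightarrow> nat set \<Rightarrow> real" where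
  "iid_prior p n D = p ^ card D * (1 - p) ^ (n - card D)"

definition test_outcomes :: "nat set list \<Rightarrow> nat set \<Rightarrow> bool list" where
  "test_outcomes tests D = map (\<lambda>t. t \<inter> D \<noteq> {}) tests"

definition success_prob :: "real \<Rightarrow> nat \<Rightarrow> nat set list \<Rightarrow> (bool list \<Rightarrow> nat set) \<Rightarrow> real" where
  "success_prob p n tests dec =
     (\<Sum>D\<in>Pow {0..<n}. if dec (test_outcomes tests D) = D then iid_prior p n D else 0)"

definition error_prob :: "real \<Rightarrow> nat \<Rightarrow> nat set list \<Rightarrow> (bool list \<Rightarrow> nat set) \<Rightarrow> real" where
  "error_prob p n tests dec = 1 - success_prob p n tests dec"

end

theory Submission
  imports Defs "HOL-Real_Asymp.Real_Asymp"
begin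

definition mu :: "real \<Rightarrow> nat set \<Rightarrow> nat set \<Rightarrow> real" where
  "mu p X D = p ^ card D * (1 - p) ^ (card X - card D)"

definition Ex :: "real \<Rightarrow> nat set \<Rightarrow> (nat set \<Rightarrow> real) \<Rightarrow> real" where
  "Ex p X f = (\<Sum>D\<in>Pow X. mu p X D * f D)"

lemma Ex_empty: "Ex p {} f = f {}"
  by (simp add: Ex_def mu_def)

lemma Ex_insert:
  assumes "finite X" "x \<notin> X"
  shows "Ex p (insert x X) f = (1 - p) * Ex p X f + p * Ex p X (\<lambda>D. f (insert x D))"
proof -
  have disj: "Pow X \<inter> insert x ` Pow X = {}" using assms(2) by auto
  have inj: "inj_on (insert x) (Pow X)"
  proof (rule inj_onI)
    fix a b assume "a \<in> Pow X" "b \<in> Pow X" "insert x a = insert x b"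
    then show "a = b" using assms(2) by (metis PowD Diff_insert_absorb subsetD)
  qed
  have m0: "mu p (insert x X) D = (1 - p) * mu p X D" if "D \<subseteq> X" for D
  proof -
    have "card D \<le> card X" using that assms(1) by (simp add: card_mono)
    then have "card (insert x X) - card D = Suc (card X - card D)" using assms by simp
    then show ?thesis by (simp add: mu_def)
  qed
  have m1: "mu p (insert x X) (insert x D) = p * mu p X D" if "D \<subseteq> X" for D
  proof -
    have fD: "finite D" using that assms(1) finite_subset by blast
    have "x \<notin> D" using that assms(2) by blast
    then have "card (insert x D) = Suc (card D)" using fD by simp
    moreover have "card (insert x X) = Suc (card X)" using assms by simp
    ultimately show ?thesis by (simp add: mu_def)
  qed
  have "Ex p (insert x X) f = (\<Sum>D\<in>Pow X. mu p (insert x X) D * f D) + (\<Sum>D\<in>insert x ` Pow X. mu p (insert x X) D * f D)"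
    unfolding Ex_def Pow_insert using disj assms(1) by (simp add: sum.union_disjoint)
  also have "(\<Sum>D\<in>insert x ` Pow X. mu p (insert x X) D * f D) = (\<Sum>D\<in>Pow X. mu p (insert x X) (insert x D) * f (insert x D))"
    using inj by (simp add: sum.reindex)
  also have "\<dots> = p * Ex p X (\<lambda>D. f (insert x D))"
    unfolding Ex_def sum_distrib_left by (rule sum.cong) (auto simp: m1)
  also have "(\<Sum>D\<in>Pow X. mu p (insert x X) D * f D) = (1 - p) * Ex p X f"
    unfolding Ex_def sum_distrib_left by (rule sum.cong) (auto simp: m0)
  finally show ?thesis .
qed

lemma Ex_cong: "(\<And>D. D \<subseteq> X \<Longrightarrow> f D = g D) \<Longrightarrow> Ex p X f = Ex p X g"
  unfolding Ex_def by (rule sum.cong) auto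

lemma Ex_add: "Ex p X (\<lambda>D. f D + g D) = Ex p X f + Ex p X g"
  unfolding Ex_def by (simp add: distrib_left sum.distrib)

lemma Ex_cmult: "Ex p X (\<lambda>D. c * f D) = c * Ex p X f"
  unfolding Ex_def by (simp add: sum_distrib_left mult_ac)

lemma Ex_diff: "Ex p X (\<lambda>D. f D - g D) = Ex p X f - Ex p X g"
  unfolding Ex_def by (simp add: right_diff_distrib sum_subtractf)

lemma Ex_sum: "Ex p X (\<lambda>D. \<Sum>i\<in>I. f i D) = (\<Sum>i\<in>I. Ex p X (f i))"
  unfolding Ex_def by (simp add: sum_distrib_left sum.swap[where A=I])

lemma mu_nonneg: "0 \<le> p \<Longrightarrow> p \<le> 1 \<Longrightarrow> 0 \<le> mu p X D"
  by (simp add: mu_def)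

lemma Ex_mono: "0 \<le> p \<Longrightarrow> p \<le> 1 \<Longrightarrow> (\<And>D. D \<subseteq> X \<Longrightarrow> f D \<le> g D) \<Longrightarrow> Ex p X f \<le> Ex p X g"
  unfolding Ex_def by (rule sum_mono) (auto intro!: mult_left_mono mu_nonneg)

lemma Ex_const: "finite X \<Longrightarrow> Ex p X (\<lambda>_. c) = c"
proof (induction X rule: finite_induct)
  case empty then show ?case by (simp add: Ex_empty)
next
  case (insert x X) then show ?case by (simp add: Ex_insert algebra_simps)
qed

lemma Ex_nonneg: "0 \<le> p \<Longrightarrow> p \<le> 1 \<Longrightarrow> (\<And>D. D \<subseteq> X \<Longrightarrow> 0 \<le> f D) \<Longrightarrow> 0 \<le> Ex p X f"
  unfolding Ex_def by (rule sum_nonneg) (auto intro!: mult_nonneg_nonneg mu_nonneg)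

lemma Ex_local_aux:
  assumes "finite Y" "finite X" "Y \<inter> X = {}"
  shows "(\<forall>D. D \<subseteq> X \<union> Y \<longrightarrow> f D = f (D \<inter> X)) \<Longrightarrow> Ex p (X \<union> Y) f = Ex p X f"
  using assms
proof (induction Y arbitrary: f rule: finite_induct)
  case empty then show ?case by simp
next
  case (insert y Y)
  have eq: "X \<union> insert y Y = insert y (X \<union> Y)" by auto
  have yX: "y \<notin> X" using insert.prems(3) by auto
  have ny: "y \<notin> X \<union> Y" using yX insert.hyps by auto
  have h1: "Ex p (X \<union> Y) f = Ex p X f"
  proof (rule insert.IH)
    show "\<forall>D. D \<subseteq> X \<union> Y \<longrightarrow> f D = f (D \<inter> X)"
      by (intro allI impI, rule insert.prems(1)[rule_format]) auto
  qed (use insert.prems(2,3) in auto)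
  have h2: "Ex p (X \<union> Y) (\<lambda>D. f (insert y D)) = Ex p (X \<union> Y) f"
  proof (rule Ex_cong)
    fix D assume D: "D \<subseteq> X \<union> Y"
    have D': "D \<subseteq> X \<union> insert y Y" and D'': "insert y D \<subseteq> X \<union> insert y Y" using D by auto
    have e1: "f (insert y D) = f (insert y D \<inter> X)" using insert.prems(1) D'' by blast
    have e2: "insert y D \<inter> X = D \<inter> X" using \<open>y \<notin> X\<close> by auto
    have e3: "f (D \<inter> X) = f D" using insert.prems(1) D' by metis
    show "f (insert y D) = f D" using e1 e2 e3 by simp
  qed
  have "Ex p (X \<union> insert y Y) f = (1 - p) * Ex p (X \<union> Y) f + p * Ex p (X \<union> Y) (\<lambda>D. f (insert y D))"
    unfolding eq by (rule Ex_insert) (use ny insert.hyps \<open>finite X\<close> in auto)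
  then show ?case using h1 h2 by (simp add: algebra_simps)
qed

lemma Ex_local:
  assumes "finite V" "X \<subseteq> V" "\<And>D. D \<subseteq> V \<Longrightarrow> f D = f (D \<inter> X)"
  shows "Ex p V f = Ex p X f"
proof -
  have "V = X \<union> (V - X)" using assms(2) by auto
  then have "Ex p V f = Ex p (X \<union> (V - X)) f" by simp
  also have "\<dots> = Ex p X f"
  proof (rule Ex_local_aux)
    show "\<forall>D. D \<subseteq> X \<union> (V - X) \<longrightarrow> f D = f (D \<inter> X)" using assms(2,3) by blast
  qed (use assms finite_subset in auto)
  finally show ?thesis .
qed

lemma Ex_prod_aux:
  assumes "finite Y" "finite X" "Y \<inter> X = {}"
  shows "Ex p (X \<union> Y) (\<lambda>D. f (D \<inter> X) * g (D \<inter> Y)) = Ex p X f * Ex p Y g"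
  using assms
proof (induction Y arbitrary: g rule: finite_induct)
  case empty
  have "Ex p X (\<lambda>D. f (D \<inter> X) * g {}) = Ex p X f * g {}"
    unfolding Ex_def sum_distrib_right
    by (rule sum.cong) (auto simp: Int_absorb2)
  then show ?case by (simp add: Ex_empty)
next
  case (insert y Y)
  have eq: "X \<union> insert y Y = insert y (X \<union> Y)" by auto
  have ny: "y \<notin> X \<union> Y" using insert by auto
  have yX: "y \<notin> X" using insert by auto
  have h1: "Ex p (X \<union> Y) (\<lambda>D. f (D \<inter> X) * g (D \<inter> insert y Y)) = Ex p X f * Ex p Y g"
  proof -
    have "Ex p (X \<union> Y) (\<lambda>D. f (D \<inter> X) * g (D \<inter> insert y Y)) = Ex p (X \<union> Y) (\<lambda>D. f (D \<inter> X) * g (D \<inter> Y))"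
    proof (rule Ex_cong)
      fix D assume "D \<subseteq> X \<union> Y"
      then have "D \<inter> insert y Y = D \<inter> Y" using ny by auto
      then show "f (D \<inter> X) * g (D \<inter> insert y Y) = f (D \<inter> X) * g (D \<inter> Y)" by simp
    qed
    also have "\<dots> = Ex p X f * Ex p Y g" by (rule insert.IH) (use insert in auto)
    finally show ?thesis .
  qed
  have h2: "Ex p (X \<union> Y) (\<lambda>D. f (insert y D \<inter> X) * g (insert y D \<inter> insert y Y)) = Ex p X f * Ex p Y (\<lambda>D. g (insert y D))"
  proof -
    have "Ex p (X \<union> Y) (\<lambda>D. f (insert y D \<inter> X) * g (insert y D \<inter> insert y Y)) = Ex p (X \<union> Y) (\<lambda>D. f (D \<inter> X) * (\<lambda>D. g (insert y D)) (D \<inter> Y))"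
    proof (rule Ex_cong)
      fix D assume "D \<subseteq> X \<union> Y"
      have "insert y D \<inter> X = D \<inter> X" "insert y D \<inter> insert y Y = insert y (D \<inter> Y)" using yX by auto
      then show "f (insert y D \<inter> X) * g (insert y D \<inter> insert y Y) = f (D \<inter> X) * (\<lambda>D. g (insert y D)) (D \<inter> Y)" by simp
    qed
    also have "\<dots> = Ex p X f * Ex p Y (\<lambda>D. g (insert y D))" by (rule insert.IH[of "\<lambda>D. g (insert y D)"]) (use insert in auto)
    finally show ?thesis .
  qed
  have h3: "Ex p (X \<union> Y) (\<lambda>D. f (D \<inter> X) * g (insert y (D \<inter> Y))) = Ex p X f * Ex p Y (\<lambda>D. g (insert y D))"
    by (rule insert.IH[of "\<lambda>D. g (insert y D)"]) (use insert in auto)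
  have e1: "Ex p (X \<union> insert y Y) (\<lambda>D. f (D \<inter> X) * g (D \<inter> insert y Y)) = (1 - p) * Ex p (X \<union> Y) (\<lambda>D. f (D \<inter> X) * g (D \<inter> insert y Y)) + p * Ex p (X \<union> Y) (\<lambda>D. f (insert y D \<inter> X) * g (insert y D \<inter> insert y Y))"
    unfolding eq by (rule Ex_insert) (use ny insert in auto)
  have e2: "Ex p (insert y Y) g = (1 - p) * Ex p Y g + p * Ex p Y (\<lambda>D. g (insert y D))"
    by (rule Ex_insert) (use insert in auto)
  show ?case unfolding e1 e2 h1 h2 by (simp add: algebra_simps)
qed

lemma Ex_indep:
  assumes "finite V" "X \<subseteq> V" "Y \<subseteq> V" "X \<inter> Y = {}"
    and f: "\<And>D. D \<subseteq> V \<Longrightarrow> f D = f (D \<inter> X)"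
    and g: "\<And>D. D \<subseteq> V \<Longrightarrow> g D = g (D \<inter> Y)"
  shows "Ex p V (\<lambda>D. f D * g D) = Ex p V f * Ex p V g"
proof -
  have fX: "finite X" "finite Y" using assms by (meson finite_subset)+
  have "Ex p V (\<lambda>D. f D * g D) = Ex p (X \<union> Y) (\<lambda>D. f D * g D)"
  proof (rule Ex_local)
    fix D assume D: "D \<subseteq> V"
    have DD: "D \<inter> (X \<union> Y) \<subseteq> V" using D by auto
    have a1: "D \<inter> (X \<union> Y) \<inter> X = D \<inter> X" "D \<inter> (X \<union> Y) \<inter> Y = D \<inter> Y" by auto
    have "f D = f (D \<inter> (X \<union> Y))" using f[OF D] f[OF DD] a1 by simp
    moreover have "g D = g (D \<inter> (X \<union> Y))" using g[OF D] g[OF DD] a1 by simp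
    ultimately show "f D * g D = f (D \<inter> (X \<union> Y)) * g (D \<inter> (X \<union> Y))" by simp
  qed (use assms(1-4) in auto)
  also have "\<dots> = Ex p (X \<union> Y) (\<lambda>D. f (D \<inter> X) * g (D \<inter> Y))"
  proof (rule Ex_cong)
    fix D assume "D \<subseteq> X \<union> Y"
    then have "D \<subseteq> V" using assms(2,3) by auto
    then show "f D * g D = f (D \<inter> X) * g (D \<inter> Y)" using f[of D] g[of D] by simp
  qed
  also have "\<dots> = Ex p X f * Ex p Y g"
    by (rule Ex_prod_aux) (use fX assms(4) in auto)
  also have "Ex p X f = Ex p V f" by (rule Ex_local[of V X f p, OF assms(1,2) f, symmetric])
  also have "Ex p Y g = Ex p V g" by (rule Ex_local[of V Y g p, OF assms(1,3) g, symmetric])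
  finally show ?thesis .
qed

lemma Ex_disj_aux: "finite A \<Longrightarrow> Ex p A (\<lambda>D. if D \<inter> A = {} then 1 else 0) = (1 - p) ^ card A"
proof (induction A rule: finite_induct)
  case empty then show ?case by (simp add: Ex_empty)
next
  case (insert a A)
  have "Ex p (insert a A) (\<lambda>D. if D \<inter> insert a A = {} then 1 else 0)
      = (1 - p) * Ex p A (\<lambda>D. if D \<inter> insert a A = {} then 1 else 0) + p * Ex p A (\<lambda>D. if insert a D \<inter> insert a A = {} then 1 else 0)"
    by (rule Ex_insert) (use insert in auto)
  also have "Ex p A (\<lambda>D. if insert a D \<inter> insert a A = {} then 1 else 0) = 0"
    by (simp add: Ex_const insert)
  also have "Ex p A (\<lambda>D. if D \<inter> insert a A = {} then 1 else 0) = Ex p A (\<lambda>D. if D \<inter> A = {} then 1 else 0)"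
    by (rule Ex_cong) (use insert in auto)
  finally show ?case using insert by simp
qed

lemma Ex_disj:
  assumes "finite V" "A \<subseteq> V"
  shows "Ex p V (\<lambda>D. if D \<inter> A = {} then 1 else 0) = (1 - p) ^ card A"
proof -
  have "Ex p V (\<lambda>D. if D \<inter> A = {} then 1 else 0) = Ex p A (\<lambda>D. if D \<inter> A = {} then 1 else 0)"
    by (rule Ex_local) (use assms in \<open>auto simp: Int_assoc\<close>)
  also have "\<dots> = (1 - p) ^ card A" by (rule Ex_disj_aux) (use assms finite_subset in blast)
  finally show ?thesis .
qed

lemma Ex_mem:
  assumes "finite V" "i \<in> V"
  shows "Ex p V (\<lambda>D. if i \<in> D then 1 else 0) = p"
proof -
  have "Ex p V (\<lambda>D. if i \<in> D then 1 else 0) = Ex p {i} (\<lambda>D. if i \<in> D then 1 else 0)"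
    by (rule Ex_local) (use assms in auto)
  also have "\<dots> = p" by (simp add: Ex_insert[of "{}" i, simplified] Ex_empty)
  finally show ?thesis .
qed

definition monoX :: "nat set \<Rightarrow> (nat set \<Rightarrow> real) \<Rightarrow> bool" where
  "monoX X f \<longleftrightarrow> (\<forall>D D'. D \<subseteq> D' \<longrightarrow> D' \<subseteq> X \<longrightarrow> f D \<le> f D')"

lemma harris_alg:
  fixes a b c d p :: real
  assumes "a \<le> c" "b \<le> d" "0 \<le> p" "p \<le> 1"
  shows "((1 - p) * a + p * c) * ((1 - p) * b + p * d) \<le> (1 - p) * (a * b) + p * (c * d)"
proof -
  have "(1 - p) * (a * b) + p * (c * d) - ((1 - p) * a + p * c) * ((1 - p) * b + p * d) = p * (1 - p) * ((c - a) * (d - b))"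
    by (simp add: algebra_simps)
  moreover have "0 \<le> p * (1 - p) * ((c - a) * (d - b))" using assms by simp
  ultimately show ?thesis by linarith
qed

lemma harris:
  assumes "finite X" "0 \<le> p" "p \<le> 1" "monoX X f" "monoX X g"
  shows "Ex p X f * Ex p X g \<le> Ex p X (\<lambda>D. f D * g D)"
  using assms
proof (induction X arbitrary: f g rule: finite_induct)
  case empty then show ?case by (simp add: Ex_empty)
next
  case (insert x X)
  let ?f1 = "\<lambda>D. f (insert x D)" and ?g1 = "\<lambda>D. g (insert x D)"
  have mf: "monoX X f" "monoX X ?f1" "monoX X g" "monoX X ?g1"
    using insert.prems(3,4) unfolding monoX_def by (metis insert_mono subset_insertI2)+
  have le1: "Ex p X f \<le> Ex p X ?f1"
  proof (rule Ex_mono)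
    fix D assume "D \<subseteq> X"
    then have "D \<subseteq> insert x D" "insert x D \<subseteq> insert x X" by auto
    then show "f D \<le> ?f1 D" using insert.prems(3) unfolding monoX_def by blast
  qed (use insert.prems(1,2) in auto)
  have le2: "Ex p X g \<le> Ex p X ?g1"
  proof (rule Ex_mono)
    fix D assume "D \<subseteq> X"
    then have "D \<subseteq> insert x D" "insert x D \<subseteq> insert x X" by auto
    then show "g D \<le> ?g1 D" using insert.prems(4) unfolding monoX_def by blast
  qed (use insert.prems(1,2) in auto)
  have i1: "Ex p X f * Ex p X g \<le> Ex p X (\<lambda>D. f D * g D)"
    using insert.IH[OF insert.prems(1,2) mf(1) mf(3)] .
  have i2: "Ex p X ?f1 * Ex p X ?g1 \<le> Ex p X (\<lambda>D. ?f1 D * ?g1 D)"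
    using insert.IH[OF insert.prems(1,2) mf(2) mf(4)] .
  have "Ex p (insert x X) f * Ex p (insert x X) g
     = ((1 - p) * Ex p X f + p * Ex p X ?f1) * ((1 - p) * Ex p X g + p * Ex p X ?g1)"
    using insert.hyps by (simp add: Ex_insert)
  also have "\<dots> \<le> (1 - p) * (Ex p X f * Ex p X g) + p * (Ex p X ?f1 * Ex p X ?g1)"
    by (rule harris_alg) (use le1 le2 insert.prems in auto)
  also have "\<dots> \<le> (1 - p) * Ex p X (\<lambda>D. f D * g D) + p * Ex p X (\<lambda>D. ?f1 D * ?g1 D)"
    using i1 i2 insert.prems(1,2) by (intro add_mono mult_left_mono) auto
  also have "\<dots> = Ex p (insert x X) (\<lambda>D. f D * g D)"
    using insert.hyps by (simp add: Ex_insert)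
  finally show ?case .
qed

lemma harris_prod:
  assumes "finite X" "0 \<le> p" "p \<le> 1" "finite S" "\<And>t. t \<in> S \<Longrightarrow> A t \<subseteq> X"
  shows "(\<Prod>t\<in>S. 1 - (1 - p) ^ card (A t)) \<le> Ex p X (\<lambda>D. \<Prod>t\<in>S. if D \<inter> A t = {} then 0 else 1)"
  using assms(4,5)
proof (induction S rule: finite_induct)
  case empty then show ?case using assms(1) by (simp add: Ex_const)
next
  case (insert s S)
  let ?h = "\<lambda>D. if D \<inter> A s = {} then 0 else (1::real)"
  let ?G = "\<lambda>D. \<Prod>t\<in>S. if D \<inter> A t = {} then 0 else (1::real)"
  have e1: "Ex p X ?h = 1 - (1 - p) ^ card (A s)"
  proof -
    have "Ex p X ?h = Ex p X (\<lambda>D. 1 - (if D \<inter> A s = {} then 1 else 0))"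
      by (rule Ex_cong) auto
    also have "\<dots> = 1 - (1 - p) ^ card (A s)"
      using Ex_disj[OF assms(1) insert.prems[of s]] by (simp add: Ex_diff Ex_const assms(1))
    finally show ?thesis .
  qed
  have mh: "monoX X ?h" unfolding monoX_def by auto
  have mG: "monoX X ?G" unfolding monoX_def
  proof (intro allI impI)
    fix D D' assume "D \<subseteq> D'" "D' \<subseteq> X"
    show "?G D \<le> ?G D'"
      by (rule prod_mono) (use \<open>D \<subseteq> D'\<close> in auto)
  qed
  have "(\<Prod>t\<in>insert s S. 1 - (1 - p) ^ card (A t)) = (1 - (1 - p) ^ card (A s)) * (\<Prod>t\<in>S. 1 - (1 - p) ^ card (A t))"
    using insert.hyps by simp
  also have "\<dots> \<le> Ex p X ?h * Ex p X ?G"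
    unfolding e1
  proof (rule mult_left_mono)
    show "(\<Prod>t\<in>S. 1 - (1 - p) ^ card (A t)) \<le> Ex p X ?G" using insert.IH insert.prems by auto
    show "0 \<le> 1 - (1 - p) ^ card (A s)" using assms(2,3) by (simp add: power_le_one)
  qed
  also have "\<dots> \<le> Ex p X (\<lambda>D. ?h D * ?G D)" by (rule harris[OF assms(1-3) mh mG])
  also have "\<dots> = Ex p X (\<lambda>D. \<Prod>t\<in>insert s S. if D \<inter> A t = {} then 0 else 1)"
    by (rule Ex_cong) (use insert.hyps in simp)
  finally show ?case .
qed

definition disguised :: "nat set list \<Rightarrow> nat set \<Rightarrow> nat \<Rightarrow> bool" where
  "disguised tests D i \<longleftrightarrow> i \<in> D \<and> (\<forall>t\<in>set tests. i \<in> t \<longrightarrow> (\<exists>j\<in>t. j \<noteq> i \<and> j \<in> D))"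

lemma success_Ex: "success_prob p n tests dec = Ex p {0..<n} (\<lambda>D. if dec (test_outcomes tests D) = D then 1 else 0)"
  unfolding success_prob_def Ex_def iid_prior_def mu_def by (rule sum.cong) auto

lemma outcomes_remove:
  assumes "disguised tests D i"
  shows "test_outcomes tests (D - {i}) = test_outcomes tests D"
  unfolding test_outcomes_def
proof (rule map_cong[OF refl])
  fix t assume t: "t \<in> set tests"
  show "(t \<inter> (D - {i}) \<noteq> {}) = (t \<inter> D \<noteq> {})"
  proof (cases "i \<in> t")
    case True
    then obtain j where "j \<in> t" "j \<noteq> i" "j \<in> D" using assms t unfolding disguised_def by blast
    then show ?thesis by auto
  next
    case False then show ?thesis by auto
  qed
qed

lemma mu_remove:
  assumes "finite V" "D \<subseteq> V" "i \<in> D" "0 < p" "p < 1"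
  shows "mu p V D = p / (1 - p) * mu p V (D - {i})"
proof -
  have fD: "finite D" using assms finite_subset by blast
  have c: "card D = Suc (card (D - {i}))" using fD assms(3) by (metis card_Suc_Diff1)
  have le: "card D \<le> card V" using assms by (simp add: card_mono)
  have c2: "card V - card (D - {i}) = Suc (card V - card D)" using c le by simp
  show ?thesis unfolding mu_def using assms(4,5) by (simp add: c c2 field_simps)
qed

lemma decoder_bound:
  assumes "0 < p" "p < 1"
  shows "success_prob p n tests dec \<le> Ex p {0..<n} (\<lambda>D. if (\<exists>i. disguised tests D i) then 0 else 1) + p / (1 - p)"
proof -
  let ?V = "{0..<n}"
  let ?s = "\<lambda>D. dec (test_outcomes tests D) = D"
  let ?b = "\<lambda>D. \<exists>i. disguised tests D i"
  define Sb where "Sb = {D \<in> Pow ?V. ?s D \<and> ?b D}"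
  define f where "f D = D - {SOME i. disguised tests D i}" for D
  have fin: "finite (Pow ?V)" by simp
  have Sb_sub: "Sb \<subseteq> Pow ?V" unfolding Sb_def by auto
  have fdis: "disguised tests D (SOME i. disguised tests D i)" if "D \<in> Sb" for D
    using that unfolding Sb_def by (auto intro: someI_ex)
  have fout: "test_outcomes tests (f D) = test_outcomes tests D" if "D \<in> Sb" for D
    unfolding f_def by (rule outcomes_remove[OF fdis[OF that]])
  have inj: "inj_on f Sb"
  proof (rule inj_onI)
    fix D1 D2 assume D: "D1 \<in> Sb" "D2 \<in> Sb" "f D1 = f D2"
    have "D1 = dec (test_outcomes tests D1)" using D(1) unfolding Sb_def by auto
    also have "\<dots> = dec (test_outcomes tests D2)" using fout[OF D(1)] fout[OF D(2)] D(3) by simp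
    also have "\<dots> = D2" using D(2) unfolding Sb_def by auto
    finally show "D1 = D2" .
  qed
  have fsub: "f ` Sb \<subseteq> Pow ?V" unfolding f_def using Sb_sub by auto
  have mono: "\<And>x y. x \<le> y \<Longrightarrow> p * x / (1-p) \<le> p * y / (1-p)"
    using assms by (simp add: divide_right_mono mult_left_mono)
  have split: "success_prob p n tests dec = (\<Sum>D\<in>Pow ?V. mu p ?V D * (if ?s D \<and> \<not> ?b D then 1 else 0)) + (\<Sum>D\<in>Pow ?V. mu p ?V D * (if D \<in> Sb then 1 else 0))"
    unfolding success_Ex Ex_def sum.distrib[symmetric]
    by (rule sum.cong) (auto simp: Sb_def)
  have p1: "(\<Sum>D\<in>Pow ?V. mu p ?V D * (if ?s D \<and> \<not> ?b D then 1 else 0)) \<le> Ex p ?V (\<lambda>D. if ?b D then 0 else 1)"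
    unfolding Ex_def by (rule sum_mono) (use assms in \<open>auto intro: mu_nonneg\<close>)
  have "(\<Sum>D\<in>Pow ?V. mu p ?V D * (if D \<in> Sb then 1 else 0)) = (\<Sum>D\<in>Sb. mu p ?V D)"
  proof -
    have "(\<Sum>D\<in>Pow ?V. mu p ?V D * (if D \<in> Sb then 1 else 0)) = (\<Sum>D\<in>Pow ?V. if D \<in> Sb then mu p ?V D else 0)"
      by (rule sum.cong) auto
    also have "\<dots> = (\<Sum>D\<in>Sb. mu p ?V D)" using sum.inter_restrict[OF fin, of "mu p ?V" Sb] Sb_sub
      by (simp add: Int_absorb1)
    finally show ?thesis .
  qed
  also have "\<dots> = (\<Sum>D\<in>Sb. p / (1 - p) * mu p ?V (f D))"
  proof (rule sum.cong[OF refl])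
    fix D assume D: "D \<in> Sb"
    show "mu p ?V D = p / (1 - p) * mu p ?V (f D)"
    proof -
      have "D \<subseteq> ?V" using D Sb_sub by auto
      moreover have "(SOME i. disguised tests D i) \<in> D" using fdis[OF D] unfolding disguised_def by blast
      ultimately show ?thesis unfolding f_def using mu_remove[of ?V D "SOME i. disguised tests D i" p] assms by simp
    qed
  qed
  also have "\<dots> = p / (1 - p) * (\<Sum>D\<in>f ` Sb. mu p ?V D)"
    by (simp add: sum_distrib_left sum.reindex[OF inj])
  also have "(\<Sum>D\<in>f ` Sb. mu p ?V D) \<le> (\<Sum>D\<in>Pow ?V. mu p ?V D)"
    by (rule sum_mono2[OF fin fsub]) (use assms in \<open>auto intro: mu_nonneg\<close>)
  also have "(\<Sum>D\<in>Pow ?V. mu p ?V D) = 1"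
    using Ex_const[of ?V p 1] unfolding Ex_def by simp
  finally have p2: "(\<Sum>D\<in>Pow ?V. mu p ?V D * (if D \<in> Sb then 1 else 0)) \<le> p / (1 - p)"
    using mono by fastforce
  show ?thesis using split p1 p2 by linarith
qed

lemma phi_mono:
  fixes a b :: real
  assumes "0 < a" "a \<le> b" "b < 1"
  shows "ln a / (1 - a) \<le> ln b / (1 - b)"
proof (rule DERIV_nonneg_imp_increasing_open[OF assms(2)])
  fix x assume x: "a < x" "x < b"
  then have x0: "0 < x" "x < 1" using assms by auto
  have "DERIV (\<lambda>y. ln y / (1 - y)) x :> ((1 / x) * (1 - x) - ln x * (-1)) / (1 - x)^2"
    using x0 by (auto intro!: derivative_eq_intros simp: power2_eq_square)
  moreover have "0 \<le> ((1 / x) * (1 - x) - ln x * (-1)) / (1 - x)^2"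
  proof -
    have "ln (1 / x) \<le> 1 / x - 1" using ln_le_minus_one[of "1/x"] x0 by simp
    then have "0 \<le> (1 / x) * (1 - x) + ln x" using x0 by (simp add: ln_div field_simps)
    then show ?thesis by simp
  qed
  ultimately show "\<exists>y. DERIV (\<lambda>y. ln y / (1 - y)) x :> y \<and> 0 \<le> y" by blast
next
  show "continuous_on {a..b} (\<lambda>y. ln y / (1 - y))"
    using assms by (intro continuous_intros) auto
qed

lemma xlnx_le:
  fixes x :: real
  assumes "0 < x" "x \<le> 1/2"
  shows "x * ln x \<le> (1 - x) * ln (1 - x)"
proof -
  have "ln x / (1 - x) \<le> ln (1 - x) / (1 - (1 - x))"
    by (rule phi_mono) (use assms in auto)
  then have "ln x / (1 - x) \<le> ln (1 - x) / x" by simp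
  then show ?thesis using assms by (simp add: field_simps)
qed

lemma lnln_half:
  fixes x :: real
  assumes "0 < x" "x \<le> 1/2"
  shows "ln x * ln (1 - x) \<le> (ln 2)^2"
proof -
  have "ln x * ln (1 - x) \<le> ln (1/2) * ln (1 - 1/2)"
  proof (rule DERIV_nonneg_imp_increasing_open[OF assms(2)])
    fix y assume y: "x < y" "y < 1/2"
    then have y0: "0 < y" "y < 1" using assms by auto
    have "DERIV (\<lambda>y. ln y * ln (1 - y)) y :> (1 / y) * ln (1 - y) + ln y * (- 1 / (1 - y))"
      using y0 by (auto intro!: derivative_eq_intros)
    moreover have "0 \<le> (1 / y) * ln (1 - y) + ln y * (- 1 / (1 - y))"
    proof -
      have "y * ln y \<le> (1 - y) * ln (1 - y)" by (rule xlnx_le) (use y0 y in auto)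
      then have "0 \<le> ((1 - y) * ln (1 - y) - y * ln y) / (y * (1 - y))" using y0 by simp
      also have "((1 - y) * ln (1 - y) - y * ln y) / (y * (1 - y)) = (1 / y) * ln (1 - y) + ln y * (- 1 / (1 - y))"
        using y0 by (simp add: field_simps)
      finally show ?thesis .
    qed
    ultimately show "\<exists>d. DERIV (\<lambda>y. ln y * ln (1 - y)) y :> d \<and> 0 \<le> d" by blast
  next
    show "continuous_on {x..1/2} (\<lambda>y. ln y * ln (1 - y))"
      using assms by (intro continuous_intros) auto
  qed
  also have "ln (1/2::real) * ln (1 - 1/2) = (ln 2)^2"
  proof -
    have "(1 - 1/2::real) = 1/2" by simp
    moreover have "ln (1/2::real) = - ln 2" by (simp add: ln_div)
    ultimately show ?thesis by (simp add: power2_eq_square)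
  qed
  finally show ?thesis .
qed

lemma lnln_le:
  fixes x :: real
  assumes "0 < x" "x < 1"
  shows "ln x * ln (1 - x) \<le> (ln 2)^2"
proof (cases "x \<le> 1/2")
  case True then show ?thesis using lnln_half assms by auto
next
  case False
  have "ln (1 - x) * ln (1 - (1 - x)) \<le> (ln 2)^2" by (rule lnln_half) (use assms False in auto)
  then show ?thesis by (simp add: mult.commute)
qed

lemma cost_bound:
  fixes p :: real and c :: nat
  assumes "0 < p" "p < 1" "2 \<le> c"
  shows "ln p - (ln 2)^2 / p \<le> real c * ln (1 - (1 - p) ^ (c - 1))"
proof -
  define x where "x = (1 - p) ^ (c - 1)"
  have x0: "0 < x" using assms unfolding x_def by simp
  have x1: "x \<le> 1 - p" unfolding x_def
  proof -
    have "(1 - p) ^ (c - 1) \<le> (1 - p) ^ 1" by (rule power_decreasing) (use assms in auto)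
    then show "(1 - p) ^ (c - 1) \<le> 1 - p" by simp
  qed
  have lx: "ln x = real (c - 1) * ln (1 - p)" unfolding x_def by (simp add: ln_realpow)
  have l1p: "ln (1 - p) \<le> - p" using ln_one_minus_pos_upper_bound[of p] assms by simp
  have l1pn: "ln (1 - p) < 0" using l1p assms by simp
  have A0: "ln x * ln (1 - x) \<le> (ln 2)^2" by (rule lnln_le) (use x0 x1 assms in auto)
  have "real c * ln (1 - x) = ln (1 - x) + real (c - 1) * ln (1 - x)"
    using assms by (simp add: of_nat_diff algebra_simps)
  also have "real (c - 1) * ln (1 - x) = ln x * ln (1 - x) / ln (1 - p)"
    using lx l1pn by (simp add: field_simps)
  finally have eq: "real c * ln (1 - x) = ln (1 - x) + ln x * ln (1 - x) / ln (1 - p)" .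
  have t1: "ln p \<le> ln (1 - x)" using x1 assms by simp
  have t2: "(ln 2)^2 / ln (1 - p) \<le> ln x * ln (1 - x) / ln (1 - p)"
    using A0 l1pn by (simp add: divide_right_mono_neg)
  have t3: "- ((ln 2)^2 / p) \<le> (ln 2)^2 / ln (1 - p)"
  proof -
    have "1 / ln (1 - p) \<ge> - 1 / p" using l1p l1pn assms by (simp add: field_simps)
    then have "(ln 2)^2 * (1 / ln (1 - p)) \<ge> (ln 2)^2 * (- 1 / p)" by (intro mult_left_mono) auto
    then show ?thesis by simp
  qed
  show ?thesis unfolding x_def[symmetric] eq using t1 t2 t3 by linarith
qed

locale gt =
  fixes n :: nat and tests :: "nat set list" and p :: real and L \<Delta> :: nat and H :: "nat set"
  assumes tests_sub: "set tests \<subseteq> Pow {0..<n}"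
    and p0: "0 < p" and p1: "p < 1"
    and H_sub: "H \<subseteq> {0..<n}"
    and deg: "\<And>i. i \<in> {0..<n} - H \<Longrightarrow> card {t \<in> set tests. i \<in> t \<and> card (t - H) \<le> L} \<le> \<Delta>"
begin

abbreviation "V \<equiv> {0..<n}"
abbreviation "TS \<equiv> set tests"

definition ST :: "nat \<Rightarrow> nat set set" where
  "ST i = {t \<in> TS. i \<in> t \<and> card (t - H) \<le> L}"

definition N :: "nat \<Rightarrow> nat set" where
  "N i = insert i (\<Union>t\<in>ST i. t - H)"

definition G :: "nat \<Rightarrow> nat set \<Rightarrow> real" where
  "G i D = (\<Prod>t\<in>ST i. if (t - H - {i}) \<inter> D = {} then 0 else 1)"

definition X :: "nat \<Rightarrow> nat set \<Rightarrow> real" where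
  "X i D = (if i \<in> D then 1 else 0) * G i D"

definition K :: "nat set \<Rightarrow> real" where
  "K D = (\<Sum>i\<in>V - H. X i D)"

definition Ebig :: "nat set \<Rightarrow> bool" where
  "Ebig D \<longleftrightarrow> (\<exists>t\<in>TS. L < card (t - H) \<and> (\<exists>i\<in>t - H. (t - H - {i}) \<inter> D = {}))"

lemma finTS: "finite TS" by simp

lemma test_fin: "t \<in> TS \<Longrightarrow> finite t"
  using tests_sub finite_subset by blast

lemma test_sub: "t \<in> TS \<Longrightarrow> t \<subseteq> V"
  using tests_sub by blast

lemma finST: "finite (ST i)" unfolding ST_def by simp

lemma G_01: "G i D = 0 \<or> G i D = 1"
proof (cases "\<exists>t\<in>ST i. (t - H - {i}) \<inter> D = {}")
  case True
  then have "G i D = 0" unfolding G_def using finST by auto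
  then show ?thesis by simp
next
  case False
  then have "G i D = 1" unfolding G_def by (intro prod.neutral) auto
  then show ?thesis by simp
qed

lemma G_nz: "G i D \<noteq> 0 \<Longrightarrow> t \<in> ST i \<Longrightarrow> (t - H - {i}) \<inter> D \<noteq> {}"
  unfolding G_def using finST by auto

lemma X_01: "0 \<le> X i D" "X i D \<le> 1"
  using G_01[of i D] unfolding X_def by auto

lemma K_nonneg: "0 \<le> K D"
  unfolding K_def by (rule sum_nonneg) (use X_01 in auto)

lemma good_imp:
  assumes "\<not> (\<exists>i. disguised tests D i)"
  shows "Ebig D \<or> K D = 0"
proof (rule ccontr)
  assume c: "\<not> (Ebig D \<or> K D = 0)"
  then have "K D \<noteq> 0" by simp
  then obtain i where i: "i \<in> V - H" "X i D \<noteq> 0"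
    unfolding K_def by (meson sum.neutral)
  then have iD: "i \<in> D" and Gi: "G i D \<noteq> 0" unfolding X_def by (auto split: if_splits)
  have "disguised tests D i"
    unfolding disguised_def
  proof (intro conjI ballI impI)
    show "i \<in> D" by fact
    fix t assume t: "t \<in> TS" "i \<in> t"
    show "\<exists>j\<in>t. j \<noteq> i \<and> j \<in> D"
    proof (cases "card (t - H) \<le> L")
      case True
      then have "t \<in> ST i" unfolding ST_def using t by auto
      then have "(t - H - {i}) \<inter> D \<noteq> {}" by (rule G_nz[OF Gi])
      then show ?thesis by auto
    next
      case False
      have "i \<in> t - H" using t i by auto
      then have "(t - H - {i}) \<inter> D \<noteq> {}" using c t False unfolding Ebig_def by auto
      then show ?thesis by auto
    qed
  qed
  then show False using assms by blast
qed

lemma good_bound: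
  "Ex p V (\<lambda>D. if (\<exists>i. disguised tests D i) then 0 else 1)
   \<le> Ex p V (\<lambda>D. if Ebig D then 1 else 0) + Ex p V (\<lambda>D. if K D = 0 then 1 else 0)"
proof -
  have "Ex p V (\<lambda>D. if (\<exists>i. disguised tests D i) then 0 else 1)
      \<le> Ex p V (\<lambda>D. (if Ebig D then 1 else 0) + (if K D = 0 then 1 else 0))"
    by (rule Ex_mono) (use p0 p1 good_imp in auto)
  then show ?thesis by (simp add: Ex_add)
qed

lemma Ebig_bound:
  "Ex p V (\<lambda>D. if Ebig D then 1 else 0)
   \<le> (\<Sum>t\<in>{t\<in>TS. L < card (t - H)}. real (card (t - H)) * (1 - p) ^ (card (t - H) - 1))"
proof -
  let ?TL = "{t\<in>TS. L < card (t - H)}"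
  have "Ex p V (\<lambda>D. if Ebig D then 1 else 0)
     \<le> Ex p V (\<lambda>D. \<Sum>t\<in>?TL. \<Sum>i\<in>t - H. if (t - H - {i}) \<inter> D = {} then 1 else 0)"
  proof (rule Ex_mono)
    fix D assume "D \<subseteq> V"
    show "(if Ebig D then 1 else 0) \<le> (\<Sum>t\<in>?TL. \<Sum>i\<in>t - H. if (t - H - {i}) \<inter> D = {} then 1 else (0::real))"
    proof (cases "Ebig D")
      case True
      then obtain t i where t: "t \<in> TS" "L < card (t - H)" "i \<in> t - H" "(t - H - {i}) \<inter> D = {}"
        unfolding Ebig_def by blast
      have fin: "finite (t - H)" using test_fin[OF t(1)] by simp
      have "(1::real) \<le> (\<Sum>i\<in>t - H. if (t - H - {i}) \<inter> D = {} then 1 else 0)"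
        using member_le_sum[OF t(3), of "\<lambda>i. if (t - H - {i}) \<inter> D = {} then 1 else (0::real)"] t fin
        by auto
      also have "\<dots> \<le> (\<Sum>t\<in>?TL. \<Sum>i\<in>t - H. if (t - H - {i}) \<inter> D = {} then 1 else 0)"
      proof (rule member_le_sum)
        show "t \<in> ?TL" using t by auto
        show "finite ?TL" by simp
        fix x assume "x \<in> ?TL - {t}"
        show "0 \<le> (\<Sum>i\<in>x - H. if (x - H - {i}) \<inter> D = {} then 1 else (0::real))"
          by (rule sum_nonneg) auto
      qed
      finally show ?thesis using True by simp
    next
      case False then show ?thesis by (auto intro!: sum_nonneg)
    qed
  qed (use p0 p1 in auto)
  also have "\<dots> = (\<Sum>t\<in>?TL. \<Sum>i\<in>t - H. Ex p V (\<lambda>D. if D \<inter> (t - H - {i}) = {} then 1 else 0))"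
    by (simp add: Ex_sum Int_commute)
  also have "\<dots> = (\<Sum>t\<in>?TL. \<Sum>i\<in>t - H. (1 - p) ^ (card (t - H) - 1))"
  proof (intro sum.cong refl)
    fix t i assume t: "t \<in> ?TL" and i: "i \<in> t - H"
    have fin: "finite (t - H)" using test_fin t by auto
    have "Ex p V (\<lambda>D. if D \<inter> (t - H - {i}) = {} then 1 else 0) = (1 - p) ^ card (t - H - {i})"
      by (rule Ex_disj) (use test_sub t in auto)
    also have "card (t - H - {i}) = card (t - H) - 1" using i fin by simp
    finally show "Ex p V (\<lambda>D. if D \<inter> (t - H - {i}) = {} then 1 else 0) = (1 - p) ^ (card (t - H) - 1)" .
  qed
  also have "\<dots> = (\<Sum>t\<in>?TL. real (card (t - H)) * (1 - p) ^ (card (t - H) - 1))"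
    by simp
  finally show ?thesis .
qed

lemma finU: "finite (\<Union>t\<in>ST x. t - H)"
  by (rule finite_UN_I[OF finST]) (use test_fin in \<open>auto simp: ST_def\<close>)

lemma N_sub: "i \<in> V - H \<Longrightarrow> N i \<subseteq> V - H"
  unfolding N_def ST_def using test_sub by blast

lemma X_local: "X i D = X i (D \<inter> N i)"
proof -
  have a: "(i \<in> D) = (i \<in> D \<inter> N i)" unfolding N_def by auto
  have b: "(t - H - {i}) \<inter> D = (t - H - {i}) \<inter> (D \<inter> N i)" if "t \<in> ST i" for t
    using that unfolding N_def by auto
  have "G i D = G i (D \<inter> N i)" unfolding G_def by (rule prod.cong) (use b in auto)
  then show ?thesis unfolding X_def using a by simp
qed

lemma card_N: assumes "x \<in> V - H" shows "card (N x) \<le> 1 + \<Delta> * L"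
proof -
  have "card (\<Union>t\<in>ST x. t - H) \<le> (\<Sum>t\<in>ST x. card (t - H))" by (rule card_UN_le[OF finST])
  also have "\<dots> \<le> (\<Sum>t\<in>ST x. L)" by (rule sum_mono) (auto simp: ST_def)
  also have "\<dots> = card (ST x) * L" by simp
  also have "\<dots> \<le> \<Delta> * L" using deg[OF assms] unfolding ST_def by simp
  finally have "card (\<Union>t\<in>ST x. t - H) \<le> \<Delta> * L" .
  moreover have "finite (\<Union>t\<in>ST x. t - H)" by (rule finU)
  then have "card (N x) \<le> Suc (card (\<Union>t\<in>ST x. t - H))" unfolding N_def by (simp add: card_insert_if)
  ultimately show ?thesis by simp
qed

definition Near :: "nat \<Rightarrow> nat set" where
  "Near i = {j \<in> V - H. N i \<inter> N j \<noteq> {}}"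

lemma card_Near: assumes "i \<in> V - H" shows "card (Near i) \<le> (1 + \<Delta> * L)^2"
proof -
  have sub: "Near i \<subseteq> (\<Union>x\<in>N i. N x)"
  proof
    fix j assume j: "j \<in> Near i"
    then obtain x where x: "x \<in> N i" "x \<in> N j" and jV: "j \<in> V - H" unfolding Near_def by auto
    have "j \<in> N x"
    proof (cases "x = j")
      case True then show ?thesis unfolding N_def by simp
    next
      case False
      then obtain t where t: "t \<in> ST j" "x \<in> t - H" using x(2) unfolding N_def by auto
      then have "t \<in> ST x" "j \<in> t - H" using jV unfolding ST_def by auto
      then show ?thesis unfolding N_def by auto
    qed
    then show "j \<in> (\<Union>x\<in>N i. N x)" using x(1) by auto
  qed
  have finN: "finite (N y)" for y unfolding N_def using finU by simp
  have "card (Near i) \<le> card (\<Union>x\<in>N i. N x)" by (rule card_mono[OF _ sub]) (use finN in auto)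
  also have "\<dots> \<le> (\<Sum>x\<in>N i. card (N x))" by (rule card_UN_le[OF finN])
  also have "\<dots> \<le> (\<Sum>x\<in>N i. 1 + \<Delta> * L)" by (rule sum_mono) (use card_N N_sub[OF assms] in auto)
  also have "\<dots> = card (N i) * (1 + \<Delta> * L)" by simp
  also have "\<dots> \<le> (1 + \<Delta> * L) * (1 + \<Delta> * L)" by (rule mult_right_mono) (use card_N[OF assms] in auto)
  finally show ?thesis by (simp add: power2_eq_square)
qed

lemma X_indep:
  assumes "i \<in> V - H" "j \<in> V - H" "N i \<inter> N j = {}"
  shows "Ex p V (\<lambda>D. X i D * X j D) = Ex p V (X i) * Ex p V (X j)"
proof (rule Ex_indep[of V "N i" "N j"])
  show "N i \<subseteq> V" "N j \<subseteq> V" using N_sub assms by blast+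
  show "X i D = X i (D \<inter> N i)" for D by (rule X_local)
  show "X j D = X j (D \<inter> N j)" for D by (rule X_local)
qed (use assms in auto)

lemma second_moment:
  defines "m \<equiv> Ex p V K"
  shows "Ex p V (\<lambda>D. (K D)^2) \<le> m^2 + m * (1 + \<Delta> * L)^2"
proof -
  let ?M = "real ((1 + \<Delta> * L)^2)"
  have m_eq: "m = (\<Sum>j\<in>V - H. Ex p V (X j))" unfolding m_def K_def by (simp add: Ex_sum)
  have EX0: "0 \<le> Ex p V (X j)" for j by (rule Ex_nonneg) (use p0 p1 X_01 in auto)
  have row: "(\<Sum>j\<in>V - H. Ex p V (\<lambda>D. X i D * X j D)) \<le> Ex p V (X i) * ?M + Ex p V (X i) * m"
    if i: "i \<in> V - H" for i
  proof -
    have fin: "finite (V - H)" by simp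
    have nsub: "Near i \<subseteq> V - H" unfolding Near_def by auto
    have "(\<Sum>j\<in>V - H. Ex p V (\<lambda>D. X i D * X j D))
        = (\<Sum>j\<in>Near i. Ex p V (\<lambda>D. X i D * X j D)) + (\<Sum>j\<in>(V - H) - Near i. Ex p V (\<lambda>D. X i D * X j D))"
      by (subst sum.subset_diff[OF nsub fin]) (simp add: add.commute)
    also have "(\<Sum>j\<in>Near i. Ex p V (\<lambda>D. X i D * X j D)) \<le> (\<Sum>j\<in>Near i. Ex p V (X i))"
    proof (rule sum_mono, rule Ex_mono)
      fix j D show "X i D * X j D \<le> X i D" using X_01[of i D] X_01[of j D] by (simp add: mult_left_le)
    qed (use p0 p1 in auto)
    also have "\<dots> = real (card (Near i)) * Ex p V (X i)" by simp
    also have "\<dots> \<le> ?M * Ex p V (X i)"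
    proof (rule mult_right_mono)
      show "real (card (Near i)) \<le> ?M" using card_Near[OF i] by (simp only: of_nat_le_iff)
    qed (use EX0 in auto)
    also have "(\<Sum>j\<in>(V - H) - Near i. Ex p V (\<lambda>D. X i D * X j D)) = (\<Sum>j\<in>(V - H) - Near i. Ex p V (X i) * Ex p V (X j))"
      by (rule sum.cong[OF refl], rule X_indep) (use i in \<open>auto simp: Near_def\<close>)
    also have "\<dots> \<le> (\<Sum>j\<in>V - H. Ex p V (X i) * Ex p V (X j))"
      by (rule sum_mono2[OF fin]) (use EX0 in auto)
    also have "\<dots> = Ex p V (X i) * m" unfolding m_eq by (simp add: sum_distrib_left)
    finally show ?thesis by (simp add: mult.commute)
  qed
  have "Ex p V (\<lambda>D. (K D)^2) = (\<Sum>i\<in>V - H. \<Sum>j\<in>V - H. Ex p V (\<lambda>D. X i D * X j D))"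
    unfolding K_def power2_eq_square sum_product by (simp add: Ex_sum)
  also have "\<dots> \<le> (\<Sum>i\<in>V - H. Ex p V (X i) * ?M + Ex p V (X i) * m)"
    by (rule sum_mono) (rule row)
  also have "\<dots> = m * ?M + m * m" unfolding m_eq by (simp add: sum.distrib sum_distrib_right)
  finally show ?thesis by (simp add: power2_eq_square algebra_simps)
qed

lemma cheb:
  defines "m \<equiv> Ex p V K"
  assumes "0 < m"
  shows "Ex p V (\<lambda>D. if K D = 0 then 1 else 0) \<le> (1 + \<Delta> * L)^2 / m"
proof -
  have "Ex p V (\<lambda>D. (if K D = 0 then 1 else 0) * m^2) \<le> Ex p V (\<lambda>D. (K D - m)^2)"
    by (rule Ex_mono) (use p0 p1 in auto)
  also have "Ex p V (\<lambda>D. (K D - m)^2) = Ex p V (\<lambda>D. (K D)^2) - 2 * m * Ex p V K + m^2"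
  proof -
    have "Ex p V (\<lambda>D. (K D - m)^2) = Ex p V (\<lambda>D. ((K D)^2 - (2 * m) * K D) + m^2)"
      by (rule Ex_cong) (simp add: power2_eq_square algebra_simps)
    also have "\<dots> = Ex p V (\<lambda>D. (K D)^2) - 2 * m * Ex p V K + m^2"
      by (simp add: Ex_add Ex_diff Ex_cmult Ex_const)
    finally show ?thesis .
  qed
  also have "\<dots> \<le> m * (1 + \<Delta> * L)^2"
    using second_moment unfolding m_def[symmetric] by (simp add: power2_eq_square)
  finally have "Ex p V (\<lambda>D. if K D = 0 then 1 else 0) * m^2 \<le> m * (1 + \<Delta> * L)^2"
    by (simp add: Ex_def sum_distrib_left mult_ac)
  then have "m * (m * Ex p V (\<lambda>D. if K D = 0 then 1 else 0)) \<le> m * (1 + \<Delta> * L)^2"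
    by (simp add: power2_eq_square mult_ac)
  then have "m * Ex p V (\<lambda>D. if K D = 0 then 1 else 0) \<le> (1 + \<Delta> * L)^2"
    using assms(2) by (simp add: mult_le_cancel_left_pos)
  then show ?thesis using assms(2) by (simp add: field_simps)
qed

lemma EX_lower:
  assumes i: "i \<in> V - H"
  shows "p * (\<Prod>t\<in>ST i. 1 - (1 - p) ^ (card (t - H) - 1)) \<le> Ex p V (X i)"
proof -
  have ind: "Ex p V (\<lambda>D. if i \<in> D then 1 else 0) = p" by (rule Ex_mem) (use i in auto)
  have Gsub: "t - H - {i} \<subseteq> V - {i}" if "t \<in> ST i" for t using that test_sub unfolding ST_def by auto
  have Gloc: "G i D = G i (D \<inter> (V - {i}))" for D
  proof -
    have "(t - H - {i}) \<inter> D = (t - H - {i}) \<inter> (D \<inter> (V - {i}))" if "t \<in> ST i" for t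
      using Gsub[OF that] by auto
    then show ?thesis unfolding G_def by (intro prod.cong) auto
  qed
  have "Ex p V (X i) = Ex p V (\<lambda>D. (if i \<in> D then 1 else 0) * G i D)" unfolding X_def by simp
  also have "\<dots> = Ex p V (\<lambda>D. if i \<in> D then 1 else 0) * Ex p V (G i)"
    by (rule Ex_indep[of V "{i}" "V - {i}"]) (use i Gloc in auto)
  also have "Ex p V (G i) = Ex p (V - {i}) (G i)"
    by (rule Ex_local) (use Gloc in auto)
  also have "Ex p (V - {i}) (G i) = Ex p (V - {i}) (\<lambda>D. \<Prod>t\<in>ST i. if D \<inter> (t - H - {i}) = {} then 0 else 1)"
    unfolding G_def by (rule Ex_cong) (simp add: Int_commute)
  finally have e1: "Ex p V (X i) = p * Ex p (V - {i}) (\<lambda>D. \<Prod>t\<in>ST i. if D \<inter> (t - H - {i}) = {} then 0 else 1)"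
    using ind by simp
  have e2: "(\<Prod>t\<in>ST i. 1 - (1 - p) ^ card (t - H - {i})) \<le> Ex p (V - {i}) (\<lambda>D. \<Prod>t\<in>ST i. if D \<inter> (t - H - {i}) = {} then 0 else 1)"
    by (rule harris_prod) (use p0 p1 finST Gsub in auto)
  have e3: "(\<Prod>t\<in>ST i. 1 - (1 - p) ^ card (t - H - {i})) = (\<Prod>t\<in>ST i. 1 - (1 - p) ^ (card (t - H) - 1))"
  proof (rule prod.cong[OF refl])
    fix t assume t: "t \<in> ST i"
    then have "i \<in> t - H" "finite (t - H)" using i test_fin unfolding ST_def by auto
    then show "1 - (1 - p) ^ card (t - H - {i}) = 1 - (1 - p) ^ (card (t - H) - 1)" by simp
  qed
  show ?thesis unfolding e1 using e2 e3 p0 by (simp add: mult_left_mono)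
qed

end

lemma amgm_exp:
  fixes a :: "nat \<Rightarrow> real"
  assumes "finite R" "R \<noteq> {}"
  shows "real (card R) * exp ((\<Sum>i\<in>R. a i) / card R) \<le> (\<Sum>i\<in>R. exp (a i))"
proof -
  define \<mu> where "\<mu> = (\<Sum>i\<in>R. a i) / card R"
  have cR: "0 < card R" using assms by (simp add: card_gt_0_iff)
  have "exp (a i) \<ge> exp \<mu> * (1 + (a i - \<mu>))" for i
  proof -
    have "exp (a i - \<mu>) \<ge> 1 + (a i - \<mu>)" by (rule exp_ge_add_one_self)
    then have "exp \<mu> * exp (a i - \<mu>) \<ge> exp \<mu> * (1 + (a i - \<mu>))" by (simp add: mult_left_mono)
    then show ?thesis by (simp add: exp_diff)
  qed
  then have "(\<Sum>i\<in>R. exp (a i)) \<ge> (\<Sum>i\<in>R. exp \<mu> * (1 + (a i - \<mu>)))" by (rule sum_mono)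
  also have "(\<Sum>i\<in>R. exp \<mu> * (1 + (a i - \<mu>))) = exp \<mu> * (card R + (\<Sum>i\<in>R. a i) - card R * \<mu>)"
    by (simp add: sum_distrib_left[symmetric] sum.distrib sum_subtractf algebra_simps)
  also have "card R * \<mu> = (\<Sum>i\<in>R. a i)" unfolding \<mu>_def using cR by simp
  finally show ?thesis unfolding \<mu>_def[symmetric] by (simp add: mult.commute)
qed

context gt
begin

definition TS1 where "TS1 = {t \<in> TS. card (t - H) = 1}"
definition TS2 where "TS2 = {t \<in> TS. 2 \<le> card (t - H) \<and> card (t - H) \<le> L}"
definition R where "R = {i \<in> V - H. \<forall>t\<in>ST i. 2 \<le> card (t - H)}"

lemma TS12: "card TS1 + card TS2 \<le> card TS"
proof -
  have "card TS1 + card TS2 = card (TS1 \<union> TS2)"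
    by (rule card_Un_disjoint[symmetric]) (auto simp: TS1_def TS2_def)
  also have "\<dots> \<le> card TS" by (rule card_mono) (auto simp: TS1_def TS2_def)
  finally show ?thesis .
qed

lemma R_card: "card (V - H) \<le> card R + card TS1"
proof -
  let ?g = "\<lambda>i. SOME t. t \<in> ST i \<and> card (t - H) < 2"
  have gp: "?g i \<in> ST i \<and> card (?g i - H) < 2" if "i \<in> (V - H) - R" for i
  proof -
    have "\<exists>t. t \<in> ST i \<and> card (t - H) < 2" using that unfolding R_def by auto
    then show ?thesis by (rule someI_ex)
  qed
  have gH: "?g i - H = {i}" if i: "i \<in> (V - H) - R" for i
  proof -
    have t: "?g i \<in> TS" "i \<in> ?g i" "card (?g i - H) < 2" using gp[OF i] unfolding ST_def by auto
    have fin: "finite (?g i - H)" using test_fin[OF t(1)] by simp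
    have iin: "i \<in> ?g i - H" using t i by auto
    then have "0 < card (?g i - H)" using fin card_gt_0_iff by blast
    then have "card (?g i - H) = 1" using t(3) by linarith
    then obtain x where "?g i - H = {x}" using card_1_singletonE by blast
    then show ?thesis using iin by auto
  qed
  have inj: "inj_on ?g ((V - H) - R)"
  proof (rule inj_onI)
    fix a b assume ab: "a \<in> (V - H) - R" "b \<in> (V - H) - R" "?g a = ?g b"
    have "{a} = ?g a - H" using gH[OF ab(1)] by simp
    also have "\<dots> = ?g b - H" using ab(3) by simp
    also have "\<dots> = {b}" using gH[OF ab(2)] by simp
    finally show "a = b" by simp
  qed
  have img: "?g ` ((V - H) - R) \<subseteq> TS1"
  proof
    fix t assume "t \<in> ?g ` ((V - H) - R)"
    then obtain i where i: "i \<in> (V - H) - R" "t = ?g i" by blast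
    have "t \<in> TS" using gp[OF i(1)] i(2) unfolding ST_def by simp
    moreover have "card (t - H) = 1" using gH[OF i(1)] i(2) by simp
    ultimately show "t \<in> TS1" unfolding TS1_def by simp
  qed
  have "card ((V - H) - R) \<le> card TS1"
    using card_inj_on_le[OF inj img] by (simp add: TS1_def)
  moreover have "card ((V - H) - R) = card (V - H) - card R"
    by (rule card_Diff_subset) (auto simp: R_def)
  moreover have "card R \<le> card (V - H)" by (rule card_mono) (auto simp: R_def)
  ultimately show ?thesis by simp
qed

definition ell :: "nat set \<Rightarrow> real" where
  "ell t = ln (1 - (1 - p) ^ (card (t - H) - 1))"

lemma pos_factor: "2 \<le> c \<Longrightarrow> 0 < 1 - (1 - p) ^ (c - 1)"
proof -
  assume c: "2 \<le> c"
  have "(1 - p) ^ (c - 1) < 1" by (rule power_less_one_iff[THEN iffD2]) (use c p0 p1 in auto)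
  then show ?thesis by simp
qed

lemma ell_nonpos: "2 \<le> card (t - H) \<Longrightarrow> ell t \<le> 0"
  unfolding ell_def using pos_factor[of "card (t - H)"] p0 p1 by (simp add: ln_le_zero_iff)

lemma m_lower1:
  "p * (\<Sum>i\<in>R. exp (\<Sum>t\<in>ST i. ell t)) \<le> Ex p V K"
proof -
  have eq: "(\<Prod>t\<in>ST i. 1 - (1 - p) ^ (card (t - H) - 1)) = exp (\<Sum>t\<in>ST i. ell t)" if i: "i \<in> R" for i
  proof -
    have "exp (\<Sum>t\<in>ST i. ell t) = (\<Prod>t\<in>ST i. exp (ell t))" by (rule exp_sum[OF finST])
    also have "\<dots> = (\<Prod>t\<in>ST i. 1 - (1 - p) ^ (card (t - H) - 1))"
    proof (rule prod.cong[OF refl])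
      fix t assume "t \<in> ST i"
      then have "2 \<le> card (t - H)" using i unfolding R_def by auto
      then show "exp (ell t) = 1 - (1 - p) ^ (card (t - H) - 1)"
        unfolding ell_def using pos_factor by simp
    qed
    finally show ?thesis by simp
  qed
  have "p * (\<Sum>i\<in>R. exp (\<Sum>t\<in>ST i. ell t)) = (\<Sum>i\<in>R. p * (\<Prod>t\<in>ST i. 1 - (1 - p) ^ (card (t - H) - 1)))"
    unfolding sum_distrib_left by (rule sum.cong[OF refl], simp only: eq)
  also have "\<dots> \<le> (\<Sum>i\<in>V - H. p * (\<Prod>t\<in>ST i. 1 - (1 - p) ^ (card (t - H) - 1)))"
  proof (rule sum_mono2)
    show "R \<subseteq> V - H" unfolding R_def by auto
    fix i show "0 \<le> p * (\<Prod>t\<in>ST i. 1 - (1 - p) ^ (card (t - H) - 1))"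
      using p0 p1 by (intro mult_nonneg_nonneg prod_nonneg) (auto simp: power_le_one)
  qed simp
  also have "\<dots> \<le> (\<Sum>i\<in>V - H. Ex p V (X i))"
    by (rule sum_mono) (rule EX_lower)
  also have "\<dots> = Ex p V K" unfolding K_def by (simp add: Ex_sum)
  finally show ?thesis .
qed

lemma sum_ell:
  "real (card TS2) * (ln p - (ln 2)^2 / p) \<le> (\<Sum>i\<in>R. \<Sum>t\<in>ST i. ell t)"
proof -
  have STR: "ST i = {t \<in> TS2. i \<in> t}" if "i \<in> R" for i
    using that unfolding R_def ST_def TS2_def by auto
  have finTS2: "finite TS2" unfolding TS2_def by simp
  have "real (card TS2) * (ln p - (ln 2)^2 / p) = (\<Sum>t\<in>TS2. ln p - (ln 2)^2 / p)" by simp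
  also have "\<dots> \<le> (\<Sum>t\<in>TS2. real (card (t - H)) * ell t)"
    by (rule sum_mono) (use cost_bound p0 p1 in \<open>auto simp: TS2_def ell_def\<close>)
  also have "\<dots> = (\<Sum>t\<in>TS2. \<Sum>i\<in>V - H. if i \<in> t then ell t else 0)"
  proof (rule sum.cong[OF refl])
    fix t assume t: "t \<in> TS2"
    have "(V - H) \<inter> {i. i \<in> t} = t - H" using test_sub t unfolding TS2_def by auto
    then show "real (card (t - H)) * ell t = (\<Sum>i\<in>V - H. if i \<in> t then ell t else 0)"
      by (simp add: sum.If_cases)
  qed
  also have "\<dots> = (\<Sum>i\<in>V - H. \<Sum>t\<in>TS2. if i \<in> t then ell t else 0)"
    by (rule sum.swap)
  also have "\<dots> \<le> (\<Sum>i\<in>R. \<Sum>t\<in>TS2. if i \<in> t then ell t else 0)"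
  proof -
    have sub: "R \<subseteq> V - H" unfolding R_def by auto
    have "(\<Sum>i\<in>V - H. \<Sum>t\<in>TS2. if i \<in> t then ell t else 0)
        = (\<Sum>i\<in>(V - H) - R. \<Sum>t\<in>TS2. if i \<in> t then ell t else 0) + (\<Sum>i\<in>R. \<Sum>t\<in>TS2. if i \<in> t then ell t else 0)"
      by (rule sum.subset_diff[OF sub]) simp
    moreover have "(\<Sum>i\<in>(V - H) - R. \<Sum>t\<in>TS2. if i \<in> t then ell t else 0) \<le> 0"
      by (intro sum_nonpos) (auto simp: TS2_def intro: ell_nonpos)
    ultimately show ?thesis by simp
  qed
  also have "\<dots> = (\<Sum>i\<in>R. \<Sum>t\<in>ST i. ell t)"
    by (rule sum.cong[OF refl]) (simp add: STR sum.inter_filter[OF finTS2, symmetric])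
  finally show ?thesis .
qed

lemma m_lower:
  assumes "R \<noteq> {}"
  shows "p * real (card R) * exp (real (card TS2) * (ln p - (ln 2)^2 / p) / card R) \<le> Ex p V K"
proof -
  have finR: "finite R" unfolding R_def by simp
  have cR: "0 < real (card R)" using assms finR by (simp add: card_gt_0_iff)
  have "exp (real (card TS2) * (ln p - (ln 2)^2 / p) / card R) \<le> exp ((\<Sum>i\<in>R. \<Sum>t\<in>ST i. ell t) / card R)"
    using sum_ell cR by (simp add: divide_right_mono)
  then have "real (card R) * exp (real (card TS2) * (ln p - (ln 2)^2 / p) / card R) \<le> (\<Sum>i\<in>R. exp (\<Sum>t\<in>ST i. ell t))"
  proof -
    have "real (card R) * exp (real (card TS2) * (ln p - (ln 2)^2 / p) / card R) \<le> real (card R) * exp ((\<Sum>i\<in>R. \<Sum>t\<in>ST i. ell t) / card R)"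
      by (rule mult_left_mono) (use \<open>exp _ \<le> _\<close> in auto)
    also have "\<dots> \<le> (\<Sum>i\<in>R. exp (\<Sum>t\<in>ST i. ell t))" by (rule amgm_exp[OF finR assms])
    finally show ?thesis .
  qed
  then have "p * (real (card R) * exp (real (card TS2) * (ln p - (ln 2)^2 / p) / card R)) \<le> p * (\<Sum>i\<in>R. exp (\<Sum>t\<in>ST i. ell t))"
    using p0 by (simp add: mult_left_mono)
  then show ?thesis using m_lower1 by (simp add: mult.assoc)
qed

end

lemma exists_H:
  fixes n :: nat and tests :: "nat set list" and L \<Delta> :: nat
  assumes sub: "set tests \<subseteq> Pow {0..<n}"
  shows "\<exists>H. H \<subseteq> {0..<n} \<and> card H * \<Delta> \<le> card (set tests) * (L + 1) \<and>
           (\<forall>i\<in>{0..<n} - H. card {t \<in> set tests. i \<in> t \<and> card (t - H) \<le> L} \<le> \<Delta>)"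
proof -
  let ?V = "{0..<n}" and ?TS = "set tests"
  define \<Phi> where "\<Phi> H = (\<Sum>t\<in>?TS. min (card (t - H)) (L + 1))" for H
  define m where "m H = \<Phi> H + \<Delta> * card H" for H
  obtain H where H: "H \<subseteq> ?V" and Hmin: "\<And>H'. H' \<subseteq> ?V \<Longrightarrow> m H \<le> m H'"
    using ex_has_least_nat[of "\<lambda>H. H \<subseteq> ?V" "{}" m] by auto
  have finH: "finite H" using H finite_subset by blast
  have tfin: "finite t" if "t \<in> ?TS" for t using sub that finite_subset by blast
  have bound: "card H * \<Delta> \<le> card ?TS * (L + 1)"
  proof -
    have "card H * \<Delta> \<le> m H" unfolding m_def by simp
    also have "\<dots> \<le> m {}" by (rule Hmin) simp
    also have "m {} = \<Phi> {}" unfolding m_def by simp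
    also have "\<dots> \<le> (\<Sum>t\<in>?TS. L + 1)" unfolding \<Phi>_def by (rule sum_mono) simp
    also have "\<dots> = card ?TS * (L + 1)" by simp
    finally show ?thesis .
  qed
  have degree: "card {t \<in> ?TS. i \<in> t \<and> card (t - H) \<le> L} \<le> \<Delta>" if i: "i \<in> ?V - H" for i
  proof -
    let ?ST = "{t \<in> ?TS. i \<in> t \<and> card (t - H) \<le> L}"
    have pw: "min (card (t - insert i H)) (L + 1) + (if t \<in> ?ST then 1 else 0) \<le> min (card (t - H)) (L + 1)"
      if t: "t \<in> ?TS" for t
    proof (cases "i \<in> t")
      case True
      have it: "i \<in> t - H" using True i by auto
      have fin: "finite (t - H)" using tfin[OF t] by simp
      have c: "card (t - insert i H) = card (t - H) - 1"
      proof -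
        have "t - insert i H = (t - H) - {i}" by auto
        then show ?thesis using it fin by simp
      qed
      have c1: "1 \<le> card (t - H)" using it fin by (metis One_nat_def Suc_leI card_gt_0_iff empty_iff)
      show ?thesis using c c1 t True by auto
    next
      case False
      then have "t - insert i H = t - H" by auto
      then show ?thesis using False by simp
    qed
    have "\<Phi> (insert i H) + card ?ST = (\<Sum>t\<in>?TS. min (card (t - insert i H)) (L + 1) + (if t \<in> ?ST then 1 else 0))"
    proof -
      have "?ST = ?TS \<inter> {t. i \<in> t \<and> card (t - H) \<le> L}" by auto
      then have "card ?ST = (\<Sum>t\<in>?TS. if t \<in> ?ST then 1 else 0)" by (simp add: sum.If_cases)
      then show ?thesis unfolding \<Phi>_def by (simp add: sum.distrib)
    qed
    also have "\<dots> \<le> \<Phi> H" unfolding \<Phi>_def by (rule sum_mono) (rule pw)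
    finally have A: "\<Phi> (insert i H) + card ?ST \<le> \<Phi> H" .
    have "m H \<le> m (insert i H)" by (rule Hmin) (use H i in auto)
    moreover have "card (insert i H) = Suc (card H)" using i finH by simp
    ultimately have "\<Phi> H + \<Delta> * card H \<le> \<Phi> (insert i H) + \<Delta> * card H + \<Delta>" unfolding m_def by simp
    then show ?thesis using A by linarith
  qed
  show ?thesis using H bound degree by blast
qed

lemma numeric:
  fixes e a nn T t1 t2 h r rho :: real
  assumes e: "0 < e" "e < 1" and a: "0 < a" and pos: "0 \<le> t1" "0 \<le> t2" "0 \<le> h" "0 \<le> nn"
    and T: "t1 + t2 \<le> T" and Tn: "(1 + a) * T \<le> (1 - e) * nn" and h: "h * 8 \<le> e^2 * T"
    and r: "nn - h - t1 \<le> r" and rho: "rho \<le> a * e / 4"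
  shows "e * nn / 2 \<le> r" and "t2 * (a + rho) \<le> (1 - e / 2) * r"
proof -
  have T0: "0 \<le> T" using T pos by linarith
  have Tle: "T \<le> (1 - e) * nn"
  proof -
    have "T \<le> (1 + a) * T" using a T0 by (simp add: mult_le_cancel_right1)
    then show ?thesis using Tn by linarith
  qed
  have e2: "e^2 \<le> e" using e by (simp add: power2_eq_square mult_le_cancel_right1)
  have hT: "h * 8 \<le> e * T" using h e2 T0 by (meson mult_right_mono order_trans)
  have hn: "h * 8 \<le> e * nn"
  proof -
    have "(1 - e) * nn \<le> nn" using e pos by (simp add: mult_left_le_one_le)
    then have "e * T \<le> e * nn" using Tle e by (intro mult_left_mono) auto
    then show ?thesis using hT by linarith
  qed
  have t1T: "t1 \<le> (1 - e) * nn" using T pos Tle by linarith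
  have t1T': "t1 \<le> nn - e * nn" using t1T by (simp add: algebra_simps)
  have en: "0 \<le> e * nn" using e pos by simp
  show "e * nn / 2 \<le> r" using r hn t1T' en by linarith
  have A: "t2 * a + t1 \<le> (1 - e) * nn"
  proof -
    have "t2 * a + t1 \<le> (t1 + t2) * (1 + a)" using pos a by (simp add: algebra_simps)
    also have "\<dots> \<le> T * (1 + a)" using T a by (intro mult_right_mono) auto
    finally show ?thesis using Tn by (simp add: mult.commute)
  qed
  have en: "0 \<le> e * nn" using e pos by simp
  have B: "t2 * (a + rho) \<le> t2 * a * (1 + e / 4)"
  proof -
    have "a + rho \<le> a * (1 + e / 4)" using rho by (simp add: algebra_simps)
    then show ?thesis using pos by (simp add: mult_left_mono mult.assoc)
  qed
  have C: "t2 * a * (1 + e / 4) \<le> ((1 - e) * nn - t1) * (1 + e / 4)"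
    using A e by (intro mult_right_mono) auto
  have D: "((1 - e) * nn - t1) * (1 + e / 4) \<le> (1 - e / 2) * (nn - h - t1)"
  proof -
    have "(1 - e / 2) * (nn - h - t1) - ((1 - e) * nn - t1) * (1 + e / 4)
        = nn * (e / 4 + e^2 / 4) + (3 * e / 4) * t1 - (1 - e / 2) * h"
      by (simp add: field_simps power2_eq_square)
    moreover have "(1 - e / 2) * h \<le> h" using e pos by (simp add: mult_left_le_one_le)
    moreover have "0 \<le> nn * e^2 / 4" "0 \<le> (3 * e / 4) * t1" using pos e by auto
    moreover have "h \<le> nn * e / 4" using hn en by (simp add: mult.commute)
    ultimately show ?thesis by (simp add: algebra_simps) linarith?
  qed
  have E: "(1 - e / 2) * (nn - h - t1) \<le> (1 - e / 2) * r" using r e by (intro mult_left_mono) auto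
  show "t2 * (a + rho) \<le> (1 - e / 2) * r" using B C D E by linarith
qed

lemma term_bound:
  fixes p :: real and c :: nat and n :: real
  assumes p: "0 < p" "p \<le> 1/2" and n: "0 < n" and c1: "1 \<le> c" and pc: "4 * ln n \<le> p * c"
  shows "real c * (1 - p) ^ (c - 1) \<le> 4 / (p * n^2)"
proof -
  define y where "y = p * c"
  have y0: "0 \<le> y" unfolding y_def using p by simp
  have a1: "(1 - p) ^ (c - 1) \<le> 2 * (1 - p) ^ c"
  proof -
    have "(1 - p) ^ c = (1 - p) ^ (c - 1) * (1 - p)" using power_minus_mult[of c "1 - p"] c1 by simp
    moreover have "0 \<le> (1 - p) ^ (c - 1)" using p by simp
    moreover have "0 \<le> (1 - p) ^ (c - 1) * (1 - 2 * p)" using p by simp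
    ultimately show ?thesis by (simp add: algebra_simps)
  qed
  have a2: "(1 - p) ^ c \<le> exp (- y)"
  proof -
    have "1 - p \<le> exp (- p)" using exp_ge_add_one_self[of "-p"] by simp
    then have "(1 - p) ^ c \<le> exp (- p) ^ c" using p by (intro power_mono) auto
    also have "exp (- p) ^ c = exp (- y)" unfolding y_def by (simp add: exp_of_nat_mult[symmetric] mult.commute)
    finally show ?thesis .
  qed
  have a3: "y * exp (- y) \<le> 2 * exp (- y / 2)"
  proof -
    have "1 + y / 2 \<le> exp (y / 2)" by (rule exp_ge_add_one_self)
    then have "y \<le> 2 * exp (y / 2)" using y0 by linarith
    then have "y * exp (- y) \<le> 2 * exp (y / 2) * exp (- y)" by (simp add: mult_right_mono)
    also have "2 * exp (y / 2) * exp (- y) = 2 * exp (- y / 2)" by (simp add: mult.assoc exp_add[symmetric])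
    finally show ?thesis .
  qed
  have a4: "exp (- y / 2) \<le> 1 / n^2"
  proof -
    have "- y / 2 \<le> - 2 * ln n" using pc unfolding y_def by linarith
    then have "exp (- y / 2) \<le> exp (- 2 * ln n)" by (simp only: exp_le_cancel_iff)
    also have "exp (- 2 * ln n) = 1 / n^2"
    proof -
      have "exp (- 2 * ln n) = n powr (- 2)" using n by (simp add: powr_def)
      also have "\<dots> = 1 / n powr 2" by (simp add: powr_minus_divide)
      also have "n powr 2 = n ^ 2" using n powr_realpow[of n 2] by simp
      finally show ?thesis .
    qed
    finally show ?thesis .
  qed
  have cy: "real c = y / p" unfolding y_def using p by simp
  have "real c * (1 - p) ^ (c - 1) \<le> real c * (2 * exp (- y))"
    using a1 a2 by (intro mult_left_mono) auto
  also have "\<dots> = 2 * (y * exp (- y)) / p" unfolding cy by simp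
  also have "\<dots> \<le> 2 * (2 * (1 / n^2)) / p"
    using a3 a4 p by (intro divide_right_mono mult_left_mono) auto
  also have "\<dots> = 4 / (p * n^2)" by simp
  finally show ?thesis .
qed

lemma main_bound:
  fixes lam eps :: real and K0 n :: nat and tests :: "nat set list" and dec :: "bool list \<Rightarrow> nat set"
  assumes lam: "0 < lam" and eps: "0 < eps" "eps < 1"
    and K0: "8 / eps^2 \<le> real K0"
    and n3: "3 \<le> n"
    and phalf: "lam / ln n \<le> 1/2"
    and rho: "(ln (ln n) - ln lam) / ln n \<le> ((ln 2)^2 / lam) * eps / 4"
    and sub: "set tests \<subseteq> Pow {0..<n}"
    and len: "real (length tests) \<le> (1 - eps) * (lam / (lam + (ln 2)^2)) * real n"
  shows "success_prob (lam / ln n) n tests dec \<le> 4 * ln n / (lam * n)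
     + (1 + real (K0 * (nat \<lceil>4 * (ln n)^2 / lam\<rceil> + 1) * nat \<lceil>4 * (ln n)^2 / lam\<rceil>))^2 / (eps / 2 * (lam / ln n) * n powr (eps/2))
     + (lam / ln n) / (1 - lam / ln n)"
proof -
  define p where "p = lam / ln n"
  define L where "L = nat \<lceil>4 * (ln n)^2 / lam\<rceil>"
  define \<Delta> where "\<Delta> = K0 * (L + 1)"
  define a where "a = (ln 2)^2 / lam"
  have ln0: "0 < ln (real n)" using n3 by simp
  have n0: "0 < real n" using n3 by simp
  have p0: "0 < p" unfolding p_def using lam ln0 by simp
  have p2: "p \<le> 1/2" unfolding p_def using phalf .
  have p1: "p < 1" using p2 by simp
  have a0: "0 < a" unfolding a_def using lam by simp
  have K0pos: "0 < real K0"
  proof -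
    have "0 < 8 / eps^2" using eps by simp
    then show ?thesis using K0 by linarith
  qed
  have lp: "0 < lam + (ln 2)^2" using lam by (simp add: add_pos_nonneg)
  have ca: "(1 + a) * (lam / (lam + (ln 2)^2)) = 1"
  proof -
    have "0 < lam + (ln 2)^2" using lam by (simp add: add_pos_nonneg)
    moreover have "1 + a = (lam + (ln 2)^2) / lam" unfolding a_def using lam by (simp add: field_simps)
    ultimately show ?thesis using lam by simp
  qed
  obtain H where H: "H \<subseteq> {0..<n}" and Hc: "card H * \<Delta> \<le> card (set tests) * (L + 1)"
    and Hd: "\<forall>i\<in>{0..<n} - H. card {t \<in> set tests. i \<in> t \<and> card (t - H) \<le> L} \<le> \<Delta>"
    using exists_H[OF sub, of \<Delta> L] by blast
  interpret G: gt n tests p L \<Delta> H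
    by unfold_locales (use sub p0 p1 H Hd in auto)
  have TS_len: "real (card (set tests)) \<le> real (length tests)" by (simp add: card_length)
  have len_n: "real (length tests) \<le> real n"
  proof -
    have "(1 - eps) * (lam / (lam + (ln 2)^2)) \<le> 1"
    proof -
      have "lam / (lam + (ln 2)^2) \<le> 1" using lam lp by (simp add: divide_le_eq_1)
      moreover have "0 \<le> lam / (lam + (ln 2)^2)" using lam lp by (simp add: less_imp_le)
      ultimately show ?thesis using eps mult_le_one[of "1 - eps" "lam / (lam + (ln 2)^2)"] by linarith
    qed
    moreover have "0 \<le> (1 - eps) * (lam / (lam + (ln 2)^2))" using eps lam lp by simp
    ultimately have "(1 - eps) * (lam / (lam + (ln 2)^2)) * real n \<le> real n"
      by (intro mult_left_le_one_le) auto
    then show ?thesis using len by linarith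
  qed
  have s1: "success_prob p n tests dec \<le> Ex p {0..<n} (\<lambda>D. if (\<exists>i. disguised tests D i) then 0 else 1) + p / (1 - p)"
    by (rule decoder_bound[OF p0 p1])
  note s2 = G.good_bound
  have s3: "Ex p {0..<n} (\<lambda>D. if G.Ebig D then 1 else 0) \<le> 4 * ln n / (lam * n)"
  proof -
    let ?TL = "{t \<in> set tests. L < card (t - H)}"
    have "Ex p {0..<n} (\<lambda>D. if G.Ebig D then 1 else 0) \<le> (\<Sum>t\<in>?TL. real (card (t - H)) * (1 - p) ^ (card (t - H) - 1))"
      by (rule G.Ebig_bound)
    also have "\<dots> \<le> (\<Sum>t\<in>?TL. 4 / (p * (real n)^2))"
    proof (rule sum_mono)
      fix t assume t: "t \<in> ?TL"
      have Lr: "4 * (ln n)^2 / lam \<le> real L" unfolding L_def by linarith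
      have "4 * ln n = p * (4 * (ln n)^2 / lam)" unfolding p_def using lam ln0 by (simp add: field_simps power2_eq_square)
      also have "\<dots> \<le> p * real (card (t - H))"
        using Lr t p0 by (intro mult_left_mono) auto
      finally have pc: "4 * ln n \<le> p * real (card (t - H))" .
      show "real (card (t - H)) * (1 - p) ^ (card (t - H) - 1) \<le> 4 / (p * (real n)^2)"
        by (rule term_bound[OF p0 p2 n0 _ pc]) (use t in auto)
    qed
    also have "\<dots> \<le> real n * (4 / (p * (real n)^2))"
    proof -
      have "card ?TL \<le> card (set tests)" by (rule card_mono) auto
      then have "real (card ?TL) \<le> real n" using TS_len len_n by linarith
      moreover have "0 \<le> 4 / (p * (real n)^2)" using p0 by simp
      ultimately show ?thesis by (simp only: sum_constant) (rule mult_right_mono)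
    qed
    also have "\<dots> = 4 * ln n / (lam * n)" unfolding p_def using n0 lam ln0 by (simp add: field_simps power2_eq_square)
    finally show ?thesis .
  qed
  have num_T: "real (card G.TS1) + real (card G.TS2) \<le> real (card (set tests))"
    using G.TS12 by (simp only: of_nat_add[symmetric] of_nat_le_iff)
  have num_Tn: "(1 + a) * real (card (set tests)) \<le> (1 - eps) * real n"
  proof -
    have "(1 + a) * real (card (set tests)) \<le> (1 + a) * ((1 - eps) * (lam / (lam + (ln 2)^2)) * real n)"
      using TS_len len a0 by (intro mult_left_mono) auto
    also have "\<dots> = ((1 + a) * (lam / (lam + (ln 2)^2))) * ((1 - eps) * real n)" by (simp only: mult_ac)
    also have "\<dots> = (1 - eps) * real n" unfolding ca by simp
    finally show ?thesis .
  qed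
  have num_h: "real (card H) * 8 \<le> eps^2 * real (card (set tests))"
  proof -
    have "card H * K0 * (L + 1) \<le> card (set tests) * (L + 1)" using Hc unfolding \<Delta>_def by (simp only: mult.assoc)
    then have hk: "card H * K0 \<le> card (set tests)" using mult_le_cancel2[of "card H * K0" "L + 1" "card (set tests)"] by simp
    have "real (card H) * 8 = real (card H) * (8 / eps^2) * eps^2" using eps by simp
    also have "\<dots> \<le> real (card H) * real K0 * eps^2" using K0 by (intro mult_right_mono mult_left_mono) auto
    also have "\<dots> \<le> real (card (set tests)) * eps^2"
      using hk by (intro mult_right_mono) (simp_all only: of_nat_mult[symmetric] of_nat_le_iff, simp)
    finally show ?thesis by (simp add: mult.commute)
  qed
  have num_r: "real n - real (card H) - real (card G.TS1) \<le> real (card G.R)"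
  proof -
    have "card ({0..<n} - H) = n - card H" using H by (simp add: card_Diff_subset finite_subset)
    moreover have "card H \<le> n" using H card_mono[of "{0..<n}" H] by simp
    ultimately show ?thesis using G.R_card by linarith
  qed
  define rho where "rho = (ln (ln n) - ln lam) / ln n"
  have num_rho: "rho \<le> a * eps / 4" using rho unfolding rho_def a_def by simp
  have rR: "eps * real n / 2 \<le> real (card G.R)" and rt2: "real (card G.TS2) * (a + rho) \<le> (1 - eps / 2) * real (card G.R)"
    using numeric[OF eps a0 _ _ _ _ num_T num_Tn num_h num_r num_rho] by auto
  have "0 < eps * real n / 2" using eps n0 by simp
  then have Rpos: "0 < real (card G.R)" using rR by linarith
  then have Rne: "G.R \<noteq> {}" by auto
  have lnp: "ln p - (ln 2)^2 / p = - (a + rho) * ln n"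
  proof -
    have "ln p = ln lam - ln (ln n)" unfolding p_def using lam ln0 by (simp add: ln_div)
    also have "\<dots> = - rho * ln n" unfolding rho_def using ln0 by simp
    finally have "ln p = - rho * ln n" .
    moreover have "(ln 2)^2 / p = a * ln n" unfolding p_def a_def using lam ln0 by simp
    ultimately show ?thesis by (simp add: algebra_simps)
  qed
  have expo: "- (1 - eps / 2) * ln n \<le> real (card G.TS2) * (ln p - (ln 2)^2 / p) / real (card G.R)"
  proof -
    have "real (card G.TS2) * (a + rho) * ln n \<le> (1 - eps / 2) * real (card G.R) * ln n"
      using rt2 ln0 by (simp add: mult_right_mono)
    then have "- ((1 - eps / 2) * real (card G.R) * ln n) \<le> real (card G.TS2) * (ln p - (ln 2)^2 / p)"
      unfolding lnp by (simp add: algebra_simps)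
    then show ?thesis using Rpos by (simp add: field_simps)
  qed
  define m where "m = Ex p {0..<n} G.K"
  have m_low: "eps / 2 * p * n powr (eps/2) \<le> m"
  proof -
    have "eps / 2 * p * n powr (eps/2) = p * (eps * real n / 2) * n powr (- (1 - eps / 2))"
    proof -
      have "real n * n powr (- (1 - eps / 2)) = n powr 1 * n powr (- (1 - eps / 2))" using n0 by (simp only: powr_one_gt_zero_iff powr_one)
      also have "\<dots> = n powr (1 + - (1 - eps / 2))" by (rule powr_add[symmetric])
      also have "1 + - (1 - eps / 2) = eps / 2" by simp
      finally show ?thesis by (simp add: algebra_simps)
    qed
    also have "\<dots> \<le> p * real (card G.R) * n powr (- (1 - eps / 2))"
      using rR p0 by (intro mult_right_mono mult_left_mono) auto
    also have "n powr (- (1 - eps / 2)) = exp (- (1 - eps / 2) * ln n)" using n0 by (simp add: powr_def)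
    also have "exp (- (1 - eps / 2) * ln n) \<le> exp (real (card G.TS2) * (ln p - (ln 2)^2 / p) / real (card G.R))"
      using expo by simp
    also have "p * real (card G.R) * exp (real (card G.TS2) * (ln p - (ln 2)^2 / p) / real (card G.R)) \<le> m"
      unfolding m_def by (rule G.m_lower[OF Rne])
    finally show ?thesis using p0 Rpos by (simp add: mult_left_mono)
  qed
  have qpos: "0 < eps / 2 * p * n powr (eps/2)" using eps p0 n0 by simp
  then have mpos: "0 < m" using m_low by linarith
  have s4: "Ex p {0..<n} (\<lambda>D. if G.K D = 0 then 1 else 0) \<le> (1 + real (\<Delta> * L))^2 / (eps / 2 * p * n powr (eps/2))"
  proof -
    have "Ex p {0..<n} (\<lambda>D. if G.K D = 0 then 1 else 0) \<le> real ((1 + \<Delta> * L)^2) / m"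
      using G.cheb mpos unfolding m_def by simp
    also have "\<dots> \<le> real ((1 + \<Delta> * L)^2) / (eps / 2 * p * n powr (eps/2))"
    proof (rule divide_left_mono)
      show "0 < m * (eps / 2 * p * n powr (eps/2))" using mpos qpos by simp
    qed (use m_low in auto)
    finally show ?thesis by simp
  qed
  show ?thesis using s1 s2 s3 s4 unfolding p_def[symmetric] L_def[symmetric] \<Delta>_def[symmetric] by linarith
qed

lemma U_lim:
  fixes lam eps K :: real
  assumes "lam > 0" "eps > 0" "K > 0"
  shows "((\<lambda>n::real. 4 * ln n / (lam * n) + (1 + K * (4 * (ln n)^2 / lam + 2)^2)^2 * (2 * ln n) / (eps * lam * n powr (eps/2)) + 2 * lam / ln n) \<longlongrightarrow> 0) at_top"
proof -
  have l1: "((\<lambda>n::real. 4 * ln n / (lam * n)) \<longlongrightarrow> 0) at_top" using assms by real_asymp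
  have l2: "((\<lambda>n::real. (1 + K * (4 * (ln n)^2 / lam + 2)^2)^2 * (2 * ln n) / (eps * lam * n powr (eps/2))) \<longlongrightarrow> 0) at_top"
    using assms by real_asymp
  have l3: "((\<lambda>n::real. 2 * lam / ln n) \<longlongrightarrow> 0) at_top" using assms by real_asymp
  show ?thesis using tendsto_add[OF tendsto_add[OF l1 l2] l3] by simp
qed

theorem theorem3:
  fixes lam eps :: real
  assumes "lam > 0" and "0 < eps" and "eps < 1"
  shows "\<forall>\<delta>>0. \<exists>n0::nat. \<forall>n>n0. \<forall>(tests :: nat set list) (dec :: bool list \<Rightarrow> nat set).
           set tests \<subseteq> Pow {0..<n} \<and>
           real (length tests) \<le> (1 - eps) * (lam / (lam + (ln 2)^2)) * real n
           \<longrightarrow> error_prob (lam / ln (real n)) n tests dec \<ge> 1 - \<delta>"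
proof (intro allI impI)
  fix \<delta> :: real assume d: "\<delta> > 0"
  note lam = assms(1) and eps = assms(2,3)
  define K0 where "K0 = nat \<lceil>8 / eps^2\<rceil>"
  have K0: "8 / eps^2 \<le> real K0" unfolding K0_def by linarith
  have K0pos: "0 < real K0"
  proof -
    have "0 < 8 / eps^2" using eps by simp
    then show ?thesis using K0 by linarith
  qed
  define a where "a = (ln 2)^2 / lam"
  have a0: "0 < a" unfolding a_def using lam by simp
  define U where "U n = 4 * ln n / (lam * n) + (1 + real K0 * (4 * (ln n)^2 / lam + 2)^2)^2 * (2 * ln n) / (eps * lam * n powr (eps/2)) + 2 * lam / ln n" for n :: real
  have ev_real: "eventually (\<lambda>n::real. 3 \<le> n \<and> lam / ln n \<le> 1/2 \<and> (ln (ln n) - ln lam) / ln n \<le> a * eps / 4 \<and> U n < \<delta>) at_top"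
  proof -
    have e1: "eventually (\<lambda>n::real. 3 \<le> n) at_top" by real_asymp
    have e2: "eventually (\<lambda>n::real. lam / ln n \<le> 1/2) at_top" using lam by real_asymp
    have "0 < a * eps / 4" using a0 eps by simp
    then have e3: "eventually (\<lambda>n::real. (ln (ln n) - ln lam) / ln n \<le> a * eps / 4) at_top"
      using lam by real_asymp
    have "(U \<longlongrightarrow> 0) at_top" unfolding U_def by (rule U_lim[OF lam eps(1) K0pos])
    then have e4: "eventually (\<lambda>n. U n < \<delta>) at_top" using d by (rule order_tendstoD(2))
    show ?thesis using e1 e2 e3 e4 by eventually_elim auto
  qed
  have "eventually (\<lambda>n::nat. 3 \<le> real n \<and> lam / ln (real n) \<le> 1/2 \<and> (ln (ln (real n)) - ln lam) / ln (real n) \<le> a * eps / 4 \<and> U (real n) < \<delta>) sequentially"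
    by (rule eventually_compose_filterlim[OF ev_real filterlim_real_sequentially])
  then obtain N where N: "\<And>n. n \<ge> N \<Longrightarrow> 3 \<le> real n \<and> lam / ln (real n) \<le> 1/2 \<and> (ln (ln (real n)) - ln lam) / ln (real n) \<le> a * eps / 4 \<and> U (real n) < \<delta>"
    unfolding eventually_sequentially by blast
  show "\<exists>n0::nat. \<forall>n>n0. \<forall>(tests :: nat set list) (dec :: bool list \<Rightarrow> nat set).
           set tests \<subseteq> Pow {0..<n} \<and>
           real (length tests) \<le> (1 - eps) * (lam / (lam + (ln 2)^2)) * real n
           \<longrightarrow> error_prob (lam / ln (real n)) n tests dec \<ge> 1 - \<delta>"
  proof (intro exI allI impI)
    fix n :: nat and tests :: "nat set list" and dec :: "bool list \<Rightarrow> nat set"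
    assume n: "N < n" and hyp: "set tests \<subseteq> Pow {0..<n} \<and> real (length tests) \<le> (1 - eps) * (lam / (lam + (ln 2)^2)) * real n"
    have Nn: "3 \<le> real n" "lam / ln (real n) \<le> 1/2" "(ln (ln (real n)) - ln lam) / ln (real n) \<le> a * eps / 4" "U (real n) < \<delta>"
      using N[of n] n by auto
    have n3: "3 \<le> n" using Nn(1) by simp
    have ln0: "0 < ln (real n)" using n3 by simp
    have n0: "0 < real n" using n3 by simp
    define x where "x = 4 * (ln (real n))^2 / lam"
    define L where "L = nat \<lceil>x\<rceil>"
    define p where "p = lam / ln (real n)"
    have x0: "0 \<le> x" unfolding x_def using lam by simp
    have Lx: "real L \<le> x + 1"
    proof -
      have "real L = of_int \<lceil>x\<rceil>" unfolding L_def using x0 by simp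
      then show ?thesis using of_int_ceiling_le_add_one[of x] by linarith
    qed
    have p0: "0 < p" unfolding p_def using lam ln0 by simp
    have p2: "p \<le> 1/2" unfolding p_def using Nn(2) .
    have mb: "success_prob p n tests dec \<le> 4 * ln n / (lam * n)
       + (1 + real (K0 * (L + 1) * L))^2 / (eps / 2 * p * n powr (eps/2)) + p / (1 - p)"
      unfolding p_def L_def x_def
      by (rule main_bound[OF lam eps K0 n3 Nn(2) _ ]) (use Nn(3) hyp in \<open>auto simp: a_def\<close>)
    have b1: "(1 + real (K0 * (L + 1) * L))^2 \<le> (1 + real K0 * (x + 2)^2)^2"
    proof -
      have "real (L + 1) * real L \<le> (x + 2) * (x + 2)" using Lx x0 by (intro mult_mono) auto
      then have "real K0 * (real (L + 1) * real L) \<le> real K0 * (x + 2)^2" using K0pos by (simp add: power2_eq_square mult_left_mono)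
      moreover have "real (K0 * (L + 1) * L) = real K0 * (real (L + 1) * real L)" by (simp only: of_nat_mult mult.assoc)
      ultimately have "1 + real (K0 * (L + 1) * L) \<le> 1 + real K0 * (x + 2)^2" by linarith
      then show ?thesis by (rule power_mono) simp
    qed
    have b2: "(1 + real (K0 * (L + 1) * L))^2 / (eps / 2 * p * n powr (eps/2)) \<le> (1 + real K0 * (x + 2)^2)^2 * (2 * ln n) / (eps * lam * n powr (eps/2))"
    proof -
      have q: "0 < eps / 2 * p * n powr (eps/2)" using eps p0 n0 by simp
      have "(1 + real (K0 * (L + 1) * L))^2 / (eps / 2 * p * n powr (eps/2)) \<le> (1 + real K0 * (x + 2)^2)^2 / (eps / 2 * p * n powr (eps/2))"
        using b1 q by (simp add: divide_right_mono)
      also have "\<dots> = (1 + real K0 * (x + 2)^2)^2 * (2 * ln n) / (eps * lam * n powr (eps/2))"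
        unfolding p_def using ln0 lam eps by (simp add: field_simps)
      finally show ?thesis .
    qed
    have b3: "p / (1 - p) \<le> 2 * lam / ln n"
    proof -
      have "p / (1 - p) \<le> p / (1/2)" using p0 p2 by (intro divide_left_mono) auto
      also have "p / (1/2) = 2 * lam / ln n" unfolding p_def by simp
      finally show ?thesis .
    qed
    have "success_prob p n tests dec \<le> U (real n)"
      using mb b2 b3 unfolding U_def x_def by linarith
    then have "success_prob p n tests dec < \<delta>" using Nn(4) by linarith
    then show "error_prob (lam / ln (real n)) n tests dec \<ge> 1 - \<delta>"
      unfolding error_prob_def p_def by linarith
  qed
qed

end
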